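(* Assume $\Delta$ is a tight SID all of whose rules are of form (I) or (II), and let $\phi$ be a tight sentence over $\Delta$ (with $\Delta$ containing a rule $\mathsf A_\phi()\leftarrow\phi$). For every $\mathcal T\in\mathcal R(\phi)$ and every configuration $(\alpha,m)$ with $(\alpha,m)\models_\Delta\chi(\mathcal T)$, we have $(\alpha,m)\simeq(\alpha_{\mathcal T},m_{\mathcal T})$.
   Context: Signature $\Sigma=(\{\mathsf C_1..\mathsf C_N\},\mathfrak I,\mathfrak P)$ with pairwise disjoint port sets $\mathfrak P(\mathsf C_i)$, port tuples $\mathfrak P(\mathsf I)$ ($\langle\mathfrak P(\mathsf I)\rangle_k$ the $k$-th, $\mathrm{comp}(p)$ the type owning $p$); behavior map with pairwise disjoint state sets $Q_{\mathsf C_i}$. Architectures $\alpha$: $\alpha(\mathsf C)\subseteq\mathbb U$, $\alpha(\mathsf I)\subseteq\mathbb U^{\#(\mathsf I)}$; a configuration is $(\alpha,m)$ with $m$ a set of places $q[u]$ containing, for each $\mathsf C$ and $u\in\alpha(\mathsf C)$, exactly one $q[u]$ with $q\in Q_{\mathsf C}$. CL formulas $\phi::=\mathsf{emp}\mid\mathsf C(x)\mid\mathsf C^q(x)\mid\mathsf I(\vec x)\mid\mathsf A(\vec x)\mid\phi*\phi\mid\exists x.\phi$, SID rules $\mathsf A(\vec x)\leftarrow\phi$ with $\mathrm{fv}(\phi)=\vec x$; $\models^s_\Delta$ is the least relation where $\mathsf C^q(x)$ denotes the single component $\mathsf C[s(x)]$ with marking $\{q[s(x)]\}$, $\mathsf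 I(\vec x)$ the single interaction $\mathsf I[s(\vec x)]$ with empty marking, $\mathsf{emp}$ the empty configuration, predicate atoms unfold by rules, $*$ is union of configurations with disjoint component sets and interaction relations, $\exists$ chooses a value. Rewriting trees $\mathcal R(\phi)$: finite labellings by rules of $\Delta$ of finite prefix-closed complete subsets of $[1,\kappa]^*$ ($\kappa$ bounds predicate-atom occurrences), root labelled $(\mathsf A(\vec x)\leftarrow\phi)$, a node labelled $(\dots\leftarrow\psi_0)$ having exactly children $1..\mathrm{npred}(\psi_0)$, child $i$ labelled by a rule whose head predicate is that of the $i$-th predicate atom of $\psi_0$. $\chi(\mathcal T)$: the root body with each $i$-th predicate atom $\mathsf A_i(\vec y_i)$ replaced by $\chi(\mathcal T|_i)[\vec x_i/\vec y_i]$, $\mathsf A_i(\vec x_i)$ the head of $\mathcal T(i)$, bound variables renamed apart (quantified at the node whose rule introduces them). Rule forms: (I) $\mathsf A(x_1)\leftarrow\mathsf C^q(x_1)$; (II) $\mathsf A(x_1..x_n)\leftarrow\exists y_1..y_k.\ \varphi*\psi*\mathop{\ast}_{i=1}^p\mathsf A_i(\vec z^i)$, $p\ge1$, $\varphi\in\{\mathsf{emp}\}\cup\{\mathsf C^q(x_1)\}$, $\psi$ a separating conjunction of interaction atoms, each variable of $(\{x_1..x_n\}\setminus\mathrm{fv}(\varphi))\cup\{y_1..y_k\}$ occurring exactly once as argument of the predicate atoms and no other arguments. Canonical model ($\mathbb U=[1,\kappa]^*$): $s^\epsilon_{\mathcal T}(x)=\epsilon$ if $x$ occurs in a component atom of the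 root rule, $s^\epsilon_{\mathcal T}(x)=i\cdot s^\epsilon_{\mathcal T|_i}(x_j)$ if $x$ is the $j$-th argument of the $i$-th predicate atom and $x_j$ the $j$-th head parameter of $\mathcal T(i)$; for $\chi(\mathcal T)=\exists\vec z.\eta$, $s_{\mathcal T}(x)=s^\epsilon_{\mathcal T}(x)$ for free $x$, $=w\cdot s^\epsilon_{\mathcal T|_w}(x)$ for $x$ quantified at $w$; $\alpha_{\mathcal T}(\mathsf C)=\{s_{\mathcal T}(x):\mathsf C^q(x)\in\eta\}$, $\alpha_{\mathcal T}(\mathsf I)=\{s_{\mathcal T}(\vec x):\mathsf I(\vec x)\in\eta\}$, $m_{\mathcal T}=\{q[s_{\mathcal T}(x)]:\mathsf C^q(x)\in\eta\}$. Tightness: a profile $\lambda$ maps predicate symbols of nonzero arity to tuples of component types of matching length; $\phi$ is tight for $\lambda$ if each argument $x_j$ of each interaction atom $\mathsf I(\vec x)$ of $\phi$ occurs in a component atom $\mathsf C^q(x_j)$ of $\phi$ with $\langle\mathfrak P(\mathsf I)\rangle_j\in\mathfrak P(\mathsf C)$ or as the $\ell$-th argument of a predicate atom $\mathsf A$ of $\phi$ with $\langle\mathfrak P(\mathsf I)\rangle_j\in\mathfrak P(\langle\lambda(\mathsf A)\rangle_\ell)$; $\Delta$ is tight if for some $\lambda_\Delta$ every rule body is tight for $\lambda_\Delta$ and each head parameter $x_j$ of $\mathsf A$ occurs in a component atom $\mathsf C^q(x_j)$ with $\mathsf C=\langle\lambda_\Delta(\mathsf A)\rangle_j$ or as the $\ell$-th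 argument of a predicate atom $\mathsf B$ with $\langle\lambda_\Delta(\mathsf B)\rangle_\ell=\langle\lambda_\Delta(\mathsf A)\rangle_j$; a formula is tight if tight for $\lambda_\Delta$. Symmetry: for bijections $\vec f=\langle f_1..f_N\rangle$, $f_i:\mathbb U\to\mathbb U$, $(\vec f(\alpha))(\mathsf C_i)=f_i(\alpha(\mathsf C_i))$, $(\vec f(\alpha))(\mathsf I)=\{\langle f_{i_1}(u_1)..f_{i_k}(u_k)\rangle:\langle u_1..u_k\rangle\in\alpha(\mathsf I)\}$ where $\mathsf C_{i_j}=\mathrm{comp}(\langle\mathfrak P(\mathsf I)\rangle_j)$, and $\vec f(m)=\{q[f_i(u)]:q[u]\in m,\ q\in Q_{\mathsf C_i}\}$. $(\alpha_1,m_1)\simeq(\alpha_2,m_2)$ iff some such $\vec f$ has $\vec f(\alpha_1)=\alpha_2$ and $\vec f(m_1)=m_2$. *)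

theory Defs
  imports Main
begin

text \<open>Component types 'c (finitely many), states 'q, interaction types 'i,
  predicate symbols 'a, variables 'v, ports 'p.\<close>

datatype ('c,'q,'i,'a,'v) form =
    Emp
  | Comp 'c 'v
  | CompSt 'c 'q 'v
  | Inter 'i "'v list"
  | Pred 'a "'v list"
  | Sep "('c,'q,'i,'a,'v) form" "('c,'q,'i,'a,'v) form"
  | Ex 'v "('c,'q,'i,'a,'v) form"

text \<open>A rule A(xs) <- body is the triple (A, xs, body).\<close>
type_synonym ('c,'q,'i,'a,'v) rule = "'a \<times> 'v list \<times> ('c,'q,'i,'a,'v) form"

fun fv :: "('c,'q,'i,'a,'v) form \<Rightarrow> 'v set" where
  "fv Emp = {}"
| "fv (Comp C x) = {x}"
| "fv (CompSt C q x) = {x}"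
| "fv (Inter I xs) = set xs"
| "fv (Pred A xs) = set xs"
| "fv (Sep a b) = fv a \<union> fv b"
| "fv (Ex x a) = fv a - {x}"

text \<open>Predicate atoms in left-to-right order (the i-th predicate atom is the (i-1)-th entry).\<close>
fun preds :: "('c,'q,'i,'a,'v) form \<Rightarrow> ('a \<times> 'v list) list" where
  "preds (Pred A xs) = [(A, xs)]"
| "preds (Sep a b) = preds a @ preds b"
| "preds (Ex x a) = preds a"
| "preds _ = []"

abbreviation npred :: "('c,'q,'i,'a,'v) form \<Rightarrow> nat" where
  "npred f \<equiv> length (preds f)"

fun catoms :: "('c,'q,'i,'a,'v) form \<Rightarrow> ('c \<times> 'q \<times> 'v) set" where
  "catoms (CompSt C q x) = {(C, q, x)}"
| "catoms (Sep a b) = catoms a \<union> catoms b"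
| "catoms (Ex x a) = catoms a"
| "catoms _ = {}"

fun iatoms :: "('c,'q,'i,'a,'v) form \<Rightarrow> ('i \<times> 'v list) set" where
  "iatoms (Inter I xs) = {(I, xs)}"
| "iatoms (Sep a b) = iatoms a \<union> iatoms b"
| "iatoms (Ex x a) = iatoms a"
| "iatoms _ = {}"

fun exs :: "'v list \<Rightarrow> ('c,'q,'i,'a,'v) form \<Rightarrow> ('c,'q,'i,'a,'v) form" where
  "exs [] f = f"
| "exs (y # ys) f = Ex y (exs ys f)"

fun bigsep :: "('c,'q,'i,'a,'v) form list \<Rightarrow> ('c,'q,'i,'a,'v) form" where
  "bigsep [] = Emp"
| "bigsep [f] = f"
| "bigsep (f # fs) = Sep f (bigsep fs)"

text \<open>P C: ports of component type C; PI I: the port tuple of interaction type I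
  (its length is the arity #(I)); Q C: states of component type C.\<close>
definition wf_sig :: "('c \<Rightarrow> 'p set) \<Rightarrow> ('i \<Rightarrow> 'p list) \<Rightarrow> ('c \<Rightarrow> 'q set) \<Rightarrow> bool" where
  "wf_sig P PI Q \<longleftrightarrow>
     (\<forall>C C'. C \<noteq> C' \<longrightarrow> P C \<inter> P C' = {}) \<and>
     (\<forall>I p. p \<in> set (PI I) \<longrightarrow> (\<exists>C. p \<in> P C)) \<and>
     (\<forall>C C'. C \<noteq> C' \<longrightarrow> Q C \<inter> Q C' = {})"

definition comp_of :: "('c \<Rightarrow> 'p set) \<Rightarrow> 'p \<Rightarrow> 'c" where
  "comp_of P p = (THE C. p \<in> P C)"

definition wf_sid :: "('i \<Rightarrow> 'p list) \<Rightarrow> ('a \<Rightarrow> nat) \<Rightarrow> nat \<Rightarrow> ('c,'q,'i,'a,'v) rule set \<Rightarrow> bool" where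
  "wf_sid PI ar \<kappa> \<Delta> \<longleftrightarrow> finite \<Delta> \<and>
     (\<forall>(A, xs, f) \<in> \<Delta>. length xs = ar A \<and> distinct xs \<and> fv f = set xs \<and>
        (\<forall>(B, ys) \<in> set (preds f). length ys = ar B) \<and>
        (\<forall>(I, ys) \<in> iatoms f. length ys = length (PI I)) \<and>
        npred f \<le> \<kappa>)"

definition rule_I :: "('c,'q,'i,'a,'v) rule \<Rightarrow> bool" where
  "rule_I r \<longleftrightarrow> (\<exists>A x1 C q. r = (A, [x1], CompSt C q x1))"

definition rule_II :: "('c,'q,'i,'a,'v) rule \<Rightarrow> bool" where
  "rule_II r \<longleftrightarrow> (\<exists>A xs ys \<phi> \<psi>s pas. 
      r = (A, xs, exs ys (Sep (Sep \<phi> (bigsep (map (\<lambda>(I, zs). Inter I zs) \<psi>s)))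
                              (bigsep (map (\<lambda>(B, zs). Pred B zs) pas)))) \<and>
      distinct (xs @ ys) \<and> pas \<noteq> [] \<and>
      (\<phi> = Emp \<or> (\<exists>C q. xs \<noteq> [] \<and> \<phi> = CompSt C q (hd xs))) \<and>
      (let V = (set xs - fv \<phi>) \<union> set ys; args = concat (map snd pas) in
         (\<forall>v \<in> V. count_list args v = 1) \<and> set args \<subseteq> V))"

text \<open>A configuration (alpha, m): alpha is given by the component part (C -> set of u),
  the interaction part (I -> set of tuples) and the marking m, a set of places q[u] = (q,u).\<close>
type_synonym ('c,'i,'q,'u) cfg = "('c \<Rightarrow> 'u set) \<times> ('i \<Rightarrow> 'u list set) \<times> ('q \<times> 'u) set"

definition Univ :: "nat \<Rightarrow> nat list set" where
  "Univ \<kappa> = {w. set w \<subseteq> {1..\<kappa>}}"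

definition is_config :: "('i \<Rightarrow> 'p list) \<Rightarrow> ('c \<Rightarrow> 'q set) \<Rightarrow> 'u set \<Rightarrow> ('c,'i,'q,'u) cfg \<Rightarrow> bool" where
  "is_config PI Q U c \<longleftrightarrow> (case c of (ca, ia, m) \<Rightarrow>
     (\<forall>C. ca C \<subseteq> U) \<and>
     (\<forall>I. \<forall>us \<in> ia I. length us = length (PI I) \<and> set us \<subseteq> U) \<and>
     (\<forall>C. \<forall>u \<in> ca C. \<exists>!q. q \<in> Q C \<and> (q, u) \<in> m))"

definition bind_store :: "'v list \<Rightarrow> 'u list \<Rightarrow> ('v \<Rightarrow> 'u) \<Rightarrow> 'v \<Rightarrow> 'u" where
  "bind_store xs us s v = (case map_of (zip xs us) v of Some u \<Rightarrow> u | None \<Rightarrow> s v)"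

text \<open>The satisfaction relation (alpha,m) |=^s_Delta phi, as least relation (inductive).
  C(x) (without state) is read as a single component in some state of Q C.\<close>
inductive sat :: "('c,'q,'i,'a,'v) rule set \<Rightarrow> ('c \<Rightarrow> 'q set) \<Rightarrow> 'u set \<Rightarrow> ('v \<Rightarrow> 'u)
                   \<Rightarrow> ('c,'q,'i,'a,'v) form \<Rightarrow> ('c,'i,'q,'u) cfg \<Rightarrow> bool"
  for \<Delta> Q U where
  sat_emp: "sat \<Delta> Q U s Emp (\<lambda>_. {}, \<lambda>_. {}, {})"
| sat_comp: "q \<in> Q C \<Longrightarrow> sat \<Delta> Q U s (Comp C x) ((\<lambda>_. {})(C := {s x}), \<lambda>_. {}, {(q, s x)})"
| sat_compst: "q \<in> Q C \<Longrightarrow> sat \<Delta> Q U s (CompSt C q x) ((\<lambda>_. {})(C := {s x}), \<lambda>_. {}, {(q, s x)})"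
| sat_inter: "sat \<Delta> Q U s (Inter I xs) (\<lambda>_. {}, (\<lambda>_. {})(I := {map s xs}), {})"
| sat_pred: "(A, xs, f) \<in> \<Delta> \<Longrightarrow> length xs = length ys \<Longrightarrow>
     sat \<Delta> Q U (bind_store xs (map s ys) s) f c \<Longrightarrow> sat \<Delta> Q U s (Pred A ys) c"
| sat_sep: "sat \<Delta> Q U s f1 (a1, b1, m1) \<Longrightarrow> sat \<Delta> Q U s f2 (a2, b2, m2) \<Longrightarrow>
     (\<forall>C. a1 C \<inter> a2 C = {}) \<Longrightarrow> (\<forall>I. b1 I \<inter> b2 I = {}) \<Longrightarrow>
     sat \<Delta> Q U s (Sep f1 f2) (\<lambda>C. a1 C \<union> a2 C, \<lambda>I. b1 I \<union> b2 I, m1 \<union> m2)"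
| sat_ex: "u \<in> U \<Longrightarrow> sat \<Delta> Q U (s(x := u)) f c \<Longrightarrow> sat \<Delta> Q U s (Ex x f) c"

text \<open>A rewriting tree is a partial labelling of positions (nat lists, children numbered from 1)
  by rules; its domain is dom T.\<close>
type_synonym ('c,'q,'i,'a,'v) rtree = "nat list \<Rightarrow> ('c,'q,'i,'a,'v) rule option"

abbreviation rbody :: "('c,'q,'i,'a,'v) rule \<Rightarrow> ('c,'q,'i,'a,'v) form" where
  "rbody r \<equiv> snd (snd r)"
abbreviation rparams :: "('c,'q,'i,'a,'v) rule \<Rightarrow> 'v list" where
  "rparams r \<equiv> fst (snd r)"

text \<open>T is in R(phi) when its root is labelled by the rule rho = (A_phi() <- phi).\<close>
definition is_rtree :: "('c,'q,'i,'a,'v) rule set \<Rightarrow> nat \<Rightarrow> ('c,'q,'i,'a,'v) rule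
                        \<Rightarrow> ('c,'q,'i,'a,'v) rtree \<Rightarrow> bool" where
  "is_rtree \<Delta> \<kappa> \<rho> T \<longleftrightarrow>
     finite (dom T) \<and> dom T \<subseteq> Univ \<kappa> \<and> T [] = Some \<rho> \<and>
     (\<forall>w v. w @ v \<in> dom T \<longrightarrow> w \<in> dom T) \<and>
     (\<forall>w r. T w = Some r \<longrightarrow> r \<in> \<Delta>) \<and>
     (\<forall>w r. T w = Some r \<longrightarrow>
        (\<forall>i. w @ [i] \<in> dom T \<longleftrightarrow> 1 \<le> i \<and> i \<le> npred (rbody r)) \<and>
        (\<forall>i r'. 1 \<le> i \<longrightarrow> i \<le> npred (rbody r) \<longrightarrow> T (w @ [i]) = Some r' \<longrightarrow>
            fst r' = fst (preds (rbody r) ! (i - 1))))"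

text \<open>Instantiating a rule body at node w: free variables via sigma, bound variables x
  renamed apart to (w, x) (the node introducing them); the i-th predicate atom (counter k)
  is replaced by ch i args, where args are the (renamed) actual arguments.\<close>
fun emb :: "nat list \<Rightarrow> ('v \<Rightarrow> nat list \<times> 'v)
            \<Rightarrow> (nat \<Rightarrow> (nat list \<times> 'v) list \<Rightarrow> ('c,'q,'i,'a,nat list \<times> 'v) form)
            \<Rightarrow> nat \<Rightarrow> ('c,'q,'i,'a,'v) form \<Rightarrow> ('c,'q,'i,'a,nat list \<times> 'v) form" where
  "emb w \<sigma> ch k Emp = Emp"
| "emb w \<sigma> ch k (Comp C x) = Comp C (\<sigma> x)"
| "emb w \<sigma> ch k (CompSt C q x) = CompSt C q (\<sigma> x)"
| "emb w \<sigma> ch k (Inter I xs) = Inter I (map \<sigma> xs)"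
| "emb w \<sigma> ch k (Pred A ys) = ch (Suc k) (map \<sigma> ys)"
| "emb w \<sigma> ch k (Sep a b) = Sep (emb w \<sigma> ch k a) (emb w \<sigma> ch (k + npred a) b)"
| "emb w \<sigma> ch k (Ex x a) = Ex (w, x) (emb w (\<sigma>(x := (w, x))) ch k a)"

text \<open>chi with fuel n: the subtree at w, head parameters instantiated with args.\<close>
fun chi_aux :: "('c,'q,'i,'a,'v) rtree \<Rightarrow> nat \<Rightarrow> nat list \<Rightarrow> (nat list \<times> 'v) list
                \<Rightarrow> ('c,'q,'i,'a,nat list \<times> 'v) form" where
  "chi_aux T 0 w args = Emp"
| "chi_aux T (Suc n) w args =
     (let r = the (T w);
          \<sigma> = (\<lambda>v. case map_of (zip (rparams r) args) v of Some z \<Rightarrow> z | None \<Rightarrow> (w, v))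
      in emb w \<sigma> (\<lambda>i a. chi_aux T n (w @ [i]) a) 0 (rbody r))"

text \<open>chi(T); the fuel card(dom T) exceeds the height of T. Free variables x of the root
  are named ([], x).\<close>
definition chi :: "('c,'q,'i,'a,'v) rtree \<Rightarrow> ('c,'q,'i,'a,nat list \<times> 'v) form" where
  "chi T = chi_aux T (card (dom T)) [] (map (Pair []) (rparams (the (T []))))"

fun seps :: "('c,'q,'i,'a,'v) rtree \<Rightarrow> nat \<Rightarrow> nat list \<Rightarrow> 'v \<Rightarrow> nat list" where
  "seps T 0 w x = []"
| "seps T (Suc n) w x =
     (let f = rbody (the (T w)) in
      if \<exists>C q. (C, q, x) \<in> catoms f then []
      else (let (i, j) = (SOME (i, j). 1 \<le> i \<and> i \<le> npred f \<and>
                              j < length (snd (preds f ! (i - 1))) \<and> snd (preds f ! (i - 1)) ! j = x)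
            in i # seps T n (w @ [i]) (rparams (the (T (w @ [i]))) ! j)))"

text \<open>s_T: a variable (w, x) of chi(T) is x quantified at w (or free, for w = []).\<close>
definition sT :: "('c,'q,'i,'a,'v) rtree \<Rightarrow> nat list \<times> 'v \<Rightarrow> nat list" where
  "sT T v = fst v @ seps T (card (dom T)) (fst v) (snd v)"

definition canon :: "('c,'q,'i,'a,'v) rtree \<Rightarrow> ('c,'i,'q,nat list) cfg" where
  "canon T =
     (\<lambda>C. {sT T x | q x. (C, q, x) \<in> catoms (chi T)},
      \<lambda>I. {map (sT T) xs | xs. (I, xs) \<in> iatoms (chi T)},
      {(q, sT T x) | C q x. (C, q, x) \<in> catoms (chi T)})"

text \<open>chi(T) has variables of type nat list * 'v; it is interpreted w.r.t. Delta with
  variables renamed by x |-> ([], x) (chi(T) contains no predicate atoms anyway).\<close>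
fun rn_form :: "('v \<Rightarrow> 'w) \<Rightarrow> ('c,'q,'i,'a,'v) form \<Rightarrow> ('c,'q,'i,'a,'w) form" where
  "rn_form g Emp = Emp"
| "rn_form g (Comp C x) = Comp C (g x)"
| "rn_form g (CompSt C q x) = CompSt C q (g x)"
| "rn_form g (Inter I xs) = Inter I (map g xs)"
| "rn_form g (Pred A xs) = Pred A (map g xs)"
| "rn_form g (Sep a b) = Sep (rn_form g a) (rn_form g b)"
| "rn_form g (Ex x a) = Ex (g x) (rn_form g a)"

definition lift_sid :: "('c,'q,'i,'a,'v) rule set \<Rightarrow> ('c,'q,'i,'a,nat list \<times> 'v) rule set" where
  "lift_sid \<Delta> = (\<lambda>(A, xs, f). (A, map (Pair []) xs, rn_form (Pair []) f)) ` \<Delta>"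

definition tight_form :: "('c \<Rightarrow> 'p set) \<Rightarrow> ('i \<Rightarrow> 'p list) \<Rightarrow> ('a \<Rightarrow> 'c list)
                          \<Rightarrow> ('c,'q,'i,'a,'v) form \<Rightarrow> bool" where
  "tight_form P PI prof f \<longleftrightarrow>
     (\<forall>(I, xs) \<in> iatoms f. \<forall>j < length xs.
        (\<exists>C q. (C, q, xs ! j) \<in> catoms f \<and> PI I ! j \<in> P C) \<or>
        (\<exists>A ys l. (A, ys) \<in> set (preds f) \<and> l < length ys \<and> ys ! l = xs ! j \<and>
                  PI I ! j \<in> P (prof A ! l)))"

definition tight_sid_for :: "('c \<Rightarrow> 'p set) \<Rightarrow> ('i \<Rightarrow> 'p list) \<Rightarrow> ('a \<Rightarrow> nat) \<Rightarrow> ('a \<Rightarrow> 'c list)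
                            \<Rightarrow> ('c,'q,'i,'a,'v) rule set \<Rightarrow> bool" where
  "tight_sid_for P PI ar prof \<Delta> \<longleftrightarrow> (\<forall>A. length (prof A) = ar A) \<and>
     (\<forall>(A, xs, f) \<in> \<Delta>. tight_form P PI prof f \<and>
        (\<forall>j < length xs.
           (\<exists>q. (prof A ! j, q, xs ! j) \<in> catoms f) \<or>
           (\<exists>B ys l. (B, ys) \<in> set (preds f) \<and> l < length ys \<and> ys ! l = xs ! j \<and>
                     prof B ! l = prof A ! j)))"

definition state_owner :: "('c \<Rightarrow> 'q set) \<Rightarrow> 'q \<Rightarrow> 'c" where
  "state_owner Q q = (THE C. q \<in> Q C)"

definition cfg_map :: "('c \<Rightarrow> 'p set) \<Rightarrow> ('i \<Rightarrow> 'p list) \<Rightarrow> ('c \<Rightarrow> 'q set)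
                       \<Rightarrow> ('c \<Rightarrow> 'u \<Rightarrow> 'u) \<Rightarrow> ('c,'i,'q,'u) cfg \<Rightarrow> ('c,'i,'q,'u) cfg" where
  "cfg_map P PI Q f c = (case c of (ca, ia, m) \<Rightarrow>
     (\<lambda>C. f C ` ca C,
      \<lambda>I. (\<lambda>us. map (\<lambda>(p, u). f (comp_of P p) u) (zip (PI I) us)) ` ia I,
      {(q, f C u) | q u C. (q, u) \<in> m \<and> q \<in> Q C}))"

definition sym_cfg :: "('c \<Rightarrow> 'p set) \<Rightarrow> ('i \<Rightarrow> 'p list) \<Rightarrow> ('c \<Rightarrow> 'q set) \<Rightarrow> 'u set
                       \<Rightarrow> ('c,'i,'q,'u) cfg \<Rightarrow> ('c,'i,'q,'u) cfg \<Rightarrow> bool" where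
  "sym_cfg P PI Q U c1 c2 \<longleftrightarrow>
     (\<exists>f. (\<forall>C. bij_betw (f C) U U) \<and> cfg_map P PI Q f c1 = c2)"

end

theory Submission
  imports Defs
begin

fun bv :: "('c,'q,'i,'a,'v) form \<Rightarrow> 'v set" where
  "bv (Sep a b) = bv a \<union> bv b"
| "bv (Ex x a) = insert x (bv a)"
| "bv _ = {}"

fun vars :: "('c,'q,'i,'a,'v) form \<Rightarrow> 'v set" where
  "vars Emp = {}"
| "vars (Comp C x) = {x}"
| "vars (CompSt C q x) = {x}"
| "vars (Inter I xs) = set xs"
| "vars (Pred A xs) = set xs"
| "vars (Sep a b) = vars a \<union> vars b"
| "vars (Ex x a) = insert x (vars a)"

fun good :: "('c,'q,'i,'a,'v) form \<Rightarrow> bool" where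
  "good (Sep a b) = (good a \<and> good b \<and> bv a \<inter> vars b = {} \<and> bv b \<inter> vars a = {})"
| "good (Ex x a) = good a"
| "good _ = True"

fun nocomp :: "('c,'q,'i,'a,'v) form \<Rightarrow> bool" where
  "nocomp (Comp C x) = False"
| "nocomp (Sep a b) = (nocomp a \<and> nocomp b)"
| "nocomp (Ex x a) = nocomp a"
| "nocomp _ = True"

fun exfree :: "('c,'q,'i,'a,'v) form \<Rightarrow> bool" where
  "exfree (Ex x a) = False"
| "exfree (Sep a b) = (exfree a \<and> exfree b)"
| "exfree _ = True"

definition model :: "('v \<Rightarrow> 'u) \<Rightarrow> ('c,'q,'i,'a,'v) form \<Rightarrow> ('c,'i,'q,'u) cfg" where
  "model s F = (\<lambda>C. {s x | q x. (C,q,x) \<in> catoms F}, \<lambda>I. {map s xs | xs. (I,xs) \<in> iatoms F},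
                {(q, s x) | C q x. (C,q,x) \<in> catoms F})"

lemma catoms_vars: "(C,q,x) \<in> catoms F \<Longrightarrow> x \<in> vars F"
  by (induction F) auto

lemma iatoms_vars: "(I,xs) \<in> iatoms F \<Longrightarrow> set xs \<subseteq> vars F"
  by (induction F) auto

lemma catoms_finite: "finite (catoms F)"
  by (induction F) auto

lemma model_cong: "(\<And>x. x \<in> vars F \<Longrightarrow> s x = t x) \<Longrightarrow> model s F = model t F"
proof -
  assume h: "\<And>x. x \<in> vars F \<Longrightarrow> s x = t x"
  have 1: "\<And>C q x. (C,q,x) \<in> catoms F \<Longrightarrow> s x = t x" using h catoms_vars by metis
  have 2: "\<And>I xs. (I,xs) \<in> iatoms F \<Longrightarrow> map s xs = map t xs"
    using h iatoms_vars by (metis map_cong subsetD)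
  have a: "\<And>C. {s x | q x. (C,q,x) \<in> catoms F} = {t x | q x. (C,q,x) \<in> catoms F}" apply (rule Collect_cong) using 1 by metis
  have b: "\<And>I. {map s xs | xs. (I,xs) \<in> iatoms F} = {map t xs | xs. (I,xs) \<in> iatoms F}" apply (rule Collect_cong) using 2 by metis
  have c: "{(q, s x) | C q x. (C,q,x) \<in> catoms F} = {(q, t x) | C q x. (C,q,x) \<in> catoms F}" apply (rule Collect_cong) using 1 by metis
  show ?thesis unfolding model_def using a b c by simp
qed

lemma model_sep: "model s (Sep a b) = (\<lambda>C. fst (model s a) C \<union> fst (model s b) C,
   \<lambda>I. fst (snd (model s a)) I \<union> fst (snd (model s b)) I, snd (snd (model s a)) \<union> snd (snd (model s b)))"
  unfolding model_def by (auto simp: fun_eq_iff)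

lemma L1:
  assumes "sat \<Delta> Q U s F c" "preds F = []" "nocomp F" "good F" "\<forall>x. s x \<in> U"
  shows "\<exists>s'. (\<forall>x. x \<notin> bv F \<longrightarrow> s' x = s x) \<and> (\<forall>x. s' x \<in> U) \<and> c = model s' F \<and>
     (\<forall>C q x q' y. (C,q,x) \<in> catoms F \<longrightarrow> (C,q',y) \<in> catoms F \<longrightarrow> s' x = s' y \<longrightarrow> x = y) \<and>
     (\<forall>C q x. (C,q,x) \<in> catoms F \<longrightarrow> q \<in> Q C)"
  using assms
proof (induction rule: sat.induct)
  case (sat_emp s)
  then show ?case by (intro exI[of _ s]) (auto simp: model_def)
next
  case (sat_comp q C s x)
  then show ?case by simp
next
  case (sat_compst q C s x)
  then show ?case by (intro exI[of _ s]) (auto simp: model_def fun_eq_iff)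
next
  case (sat_inter s I xs)
  then show ?case by (intro exI[of _ s]) (auto simp: model_def fun_eq_iff)
next
  case (sat_pred A xs f ys s c)
  then show ?case by simp
next
  case (sat_sep s f1 a1 b1 m1 f2 a2 b2 m2)
  from sat_sep.prems have p: "preds f1 = []" "preds f2 = []" "nocomp f1" "nocomp f2" "good f1" "good f2"
     "bv f1 \<inter> vars f2 = {}" "bv f2 \<inter> vars f1 = {}" by auto
  obtain s1 where s1: "\<forall>x. x \<notin> bv f1 \<longrightarrow> s1 x = s x" "\<forall>x. s1 x \<in> U" "(a1,b1,m1) = model s1 f1"
     "\<forall>C q x q' y. (C,q,x) \<in> catoms f1 \<longrightarrow> (C,q',y) \<in> catoms f1 \<longrightarrow> s1 x = s1 y \<longrightarrow> x = y"
     "\<forall>C q x. (C,q,x) \<in> catoms f1 \<longrightarrow> q \<in> Q C"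
    using sat_sep.IH(1) p sat_sep.prems(4) by blast
  obtain s2 where s2: "\<forall>x. x \<notin> bv f2 \<longrightarrow> s2 x = s x" "\<forall>x. s2 x \<in> U" "(a2,b2,m2) = model s2 f2"
     "\<forall>C q x q' y. (C,q,x) \<in> catoms f2 \<longrightarrow> (C,q',y) \<in> catoms f2 \<longrightarrow> s2 x = s2 y \<longrightarrow> x = y"
     "\<forall>C q x. (C,q,x) \<in> catoms f2 \<longrightarrow> q \<in> Q C"
    using sat_sep.IH(2) p sat_sep.prems(4) by blast
  define s' where "s' = (\<lambda>x. if x \<in> bv f1 then s1 x else s2 x)"
  have e1: "\<And>x. x \<in> vars f1 \<Longrightarrow> s' x = s1 x" using p(8) s1(1) s2(1) unfolding s'_def by auto
  have e2: "\<And>x. x \<in> vars f2 \<Longrightarrow> s' x = s2 x" using p(7) unfolding s'_def by auto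
  have m1: "model s' f1 = (a1,b1,m1)" using model_cong[of f1 s' s1] e1 s1(3) by simp
  have m2: "model s' f2 = (a2,b2,m2)" using model_cong[of f2 s' s2] e2 s2(3) by simp
  have mm: "(\<lambda>C. a1 C \<union> a2 C, \<lambda>I. b1 I \<union> b2 I, m1 \<union> m2) = model s' (Sep f1 f2)"
    using m1 m2 by (simp add: model_sep)
  have inj: "\<forall>C q x q' y. (C,q,x) \<in> catoms (Sep f1 f2) \<longrightarrow> (C,q',y) \<in> catoms (Sep f1 f2) \<longrightarrow> s' x = s' y \<longrightarrow> x = y"
  proof (intro allI impI)
    fix C q x q' y
    assume a: "(C,q,x) \<in> catoms (Sep f1 f2)" "(C,q',y) \<in> catoms (Sep f1 f2)" "s' x = s' y"
    have in1: "\<And>q z. (C,q,z) \<in> catoms f1 \<Longrightarrow> s' z \<in> a1 C"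
      using m1 e1 catoms_vars unfolding model_def by (metis (mono_tags, lifting) mem_Collect_eq prod.inject)
    have in2: "\<And>q z. (C,q,z) \<in> catoms f2 \<Longrightarrow> s' z \<in> a2 C"
      using m2 e2 catoms_vars unfolding model_def by (metis (mono_tags, lifting) mem_Collect_eq prod.inject)
    have d: "a1 C \<inter> a2 C = {}" using sat_sep.hyps(3) by blast
    from a(1,2) show "x = y"
    proof (elim UnE[of _ "catoms f1" "catoms f2", unfolded catoms.simps[symmetric]])
      assume "(C,q,x) \<in> catoms f1" "(C,q',y) \<in> catoms f1"
      then show ?thesis using s1(4) e1 catoms_vars a(3) by metis
    next
      assume "(C,q,x) \<in> catoms f2" "(C,q',y) \<in> catoms f2"
      then show ?thesis using s2(4) e2 catoms_vars a(3) by metis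
    next
      assume "(C,q,x) \<in> catoms f1" "(C,q',y) \<in> catoms f2"
      then show ?thesis using in1 in2 d a(3) by (metis disjoint_iff)
    next
      assume "(C,q,x) \<in> catoms f2" "(C,q',y) \<in> catoms f1"
      then show ?thesis using in1 in2 d a(3) by (metis disjoint_iff)
    qed
  qed
  have q: "\<forall>C q x. (C,q,x) \<in> catoms (Sep f1 f2) \<longrightarrow> q \<in> Q C" using s1(5) s2(5) by fastforce
  have f: "\<forall>x. x \<notin> bv (Sep f1 f2) \<longrightarrow> s' x = s x" using s1(1) s2(1) by (auto simp: s'_def)
  have u: "\<forall>x. s' x \<in> U" using s1(2) s2(2) by (auto simp: s'_def)
  show ?case
    apply (intro exI[of _ s'] conjI)
    using f u mm inj q by auto
next
  case (sat_ex u s x f c)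
  have p: "preds f = []" "nocomp f" "good f" using sat_ex.prems by auto
  have uu: "\<forall>y. (s(x:=u)) y \<in> U" using sat_ex.prems(4) sat_ex.hyps(1) by auto
  obtain s'' where h: "\<forall>y. y \<notin> bv f \<longrightarrow> s'' y = (s(x:=u)) y" "\<forall>x. s'' x \<in> U" "c = model s'' f"
     "\<forall>C q x q' y. (C,q,x) \<in> catoms f \<longrightarrow> (C,q',y) \<in> catoms f \<longrightarrow> s'' x = s'' y \<longrightarrow> x = y"
     "\<forall>C q x. (C,q,x) \<in> catoms f \<longrightarrow> q \<in> Q C"
    using sat_ex.IH[OF p uu] by blast
  have m: "model s'' (Ex x f) = model s'' f" by (simp add: model_def)
  show ?case
    apply (intro exI[of _ s''] conjI)
    using h m by auto
qed

lemma Union_lessThan_add: fixes a b :: nat shows "(\<Union>i<a+b. X i) = (\<Union>i<a. X i) \<union> (\<Union>i<b. X (a+i))"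
proof -
  have "{..<a+b} = {..<a} \<union> (\<lambda>i. a+i) ` {..<b}"
  proof (rule set_eqI)
    fix x :: nat
    show "x \<in> {..<a+b} \<longleftrightarrow> x \<in> {..<a} \<union> (\<lambda>i. a+i) ` {..<b}"
    proof
      assume "x \<in> {..<a+b}"
      then show "x \<in> {..<a} \<union> (\<lambda>i. a+i) ` {..<b}"
        by (cases "x < a") (auto simp: image_iff intro!: bexI[of _ "x - a"])
    qed auto
  qed
  then show ?thesis by auto
qed

lemma emb_exs: "emb w \<sigma> ch k (exs ys g) =
   exs (map (Pair w) ys) (emb w (\<lambda>v. if v \<in> set ys then (w,v) else \<sigma> v) ch k g)"
proof (induction ys arbitrary: \<sigma>)
  case Nil then show ?case by simp
next
  case (Cons y ys)
  have "(\<lambda>v. if v \<in> set ys then (w, v) else (\<sigma>(y := (w, y))) v) = (\<lambda>v. if v \<in> set (y#ys) then (w,v) else \<sigma> v)"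
    by auto
  then show ?case using Cons by simp
qed

lemma exs_simps[simp]:
  "catoms (exs ys g) = catoms g" "iatoms (exs ys g) = iatoms g" "preds (exs ys g) = preds g"
  "bv (exs ys g) = set ys \<union> bv g" "vars (exs ys g) = set ys \<union> vars g"
  "good (exs ys g) = good g" "nocomp (exs ys g) = nocomp g" "fv (exs ys g) = fv g - set ys"
  by (induction ys) auto

lemma bigsep_simps[simp]:
  "catoms (bigsep fs) = (\<Union>f\<in>set fs. catoms f)" "iatoms (bigsep fs) = (\<Union>f\<in>set fs. iatoms f)"
  "preds (bigsep fs) = concat (map preds fs)"
  "exfree (bigsep fs) = (\<forall>f\<in>set fs. exfree f)" "nocomp (bigsep fs) = (\<forall>f\<in>set fs. nocomp f)"
  by (induction fs rule: bigsep.induct) auto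

lemma count_one_pos: "count_list ys x = 1 \<Longrightarrow> p < length ys \<Longrightarrow> p' < length ys \<Longrightarrow> ys!p = x \<Longrightarrow> ys!p' = x \<Longrightarrow> p = p'"
proof (induction ys arbitrary: p p')
  case Nil then show ?case by simp
next
  case (Cons y ys)
  show ?case
  proof (cases "y = x")
    case True
    then have "x \<notin> set ys" using Cons.prems(1) count_list_0_iff by fastforce
    then show ?thesis using Cons.prems by (cases p; cases p'; auto)
  next
    case False
    then show ?thesis using Cons by (cases p; cases p'; auto)
  qed
qed

lemma count_concat_unique:
  "count_list (concat xss) x = 1 \<Longrightarrow> i < length xss \<Longrightarrow> j < length (xss!i) \<Longrightarrow> xss!i!j = x \<Longrightarrow>
   i' < length xss \<Longrightarrow> j' < length (xss!i') \<Longrightarrow> xss!i'!j' = x \<Longrightarrow> i = i' \<and> j = j'"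
proof (induction xss arbitrary: i i')
  case Nil then show ?case by simp
next
  case (Cons xs xss)
  have c: "count_list xs x + count_list (concat xss) x = 1" using Cons.prems(1) by simp
  have pos: "\<And>ys. x \<in> set ys \<Longrightarrow> count_list ys x \<noteq> 0" using count_list_0_iff by metis
  show ?case
  proof (cases i)
    case 0
    then have xin: "x \<in> set xs" using Cons.prems by (metis nth_Cons_0 nth_mem)
    show ?thesis
    proof (cases i')
      case 0
      then show ?thesis using \<open>i = 0\<close> Cons.prems c pos[OF xin] count_one_pos[of xs x j j'] by auto
    next
      case (Suc i2)
      then have "x \<in> set (concat xss)" using Cons.prems by (metis Suc_less_eq length_Cons nth_Cons_Suc nth_mem set_concat UN_I)
      then have "count_list (concat xss) x \<noteq> 0" using pos by blast
      then show ?thesis using c pos[OF xin] by arith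
    qed
  next
    case (Suc i1)
    then have xin: "x \<in> set (concat xss)" using Cons.prems by (metis Suc_less_eq length_Cons nth_Cons_Suc nth_mem set_concat UN_I)
    show ?thesis
    proof (cases i')
      case 0
      then have "x \<in> set xs" using Cons.prems by (metis nth_Cons_0 nth_mem)
      then have "count_list xs x \<noteq> 0" using pos by blast
      then show ?thesis using c pos[OF xin] by arith
    next
      case (Suc i2)
      have "count_list (concat xss) x \<noteq> 0" using pos xin by blast
      then have "count_list (concat xss) x = 1" using c by arith
      then show ?thesis using Cons.IH[of i1 i2] Cons.prems \<open>i = Suc i1\<close> Suc by auto
    qed
  qed
qed

lemma in_concat_nth: "x \<in> set (concat xss) \<Longrightarrow> \<exists>i j. i < length xss \<and> j < length (xss!i) \<and> xss!i!j = x"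
  by (metis in_set_conv_nth set_concat UN_E)

definition swp :: "'u \<Rightarrow> 'u \<Rightarrow> 'u \<Rightarrow> 'u" where
  "swp a b z = (if z = a then b else if z = b then a else z)"

lemma swp_bij: assumes "a \<in> U" "b \<in> U" shows "bij_betw (swp a b) U U"
proof -
  have inv: "\<And>z. swp a b (swp a b z) = z" by (simp add: swp_def)
  have im: "swp a b ` U \<subseteq> U" using assms by (auto simp: swp_def)
  show ?thesis by (rule bij_betw_byWitness[where f'="swp a b"]) (use inv im in auto)
qed

lemma extend_bij:
  assumes "finite A" "A \<subseteq> U" "inj_on g A" "g ` A \<subseteq> U"
  shows "\<exists>f. bij_betw f U U \<and> (\<forall>a\<in>A. f a = g a)"
  using assms
proof (induction A rule: finite_induct)
  case empty
  then show ?case by (intro exI[of _ id]) (auto simp: bij_betw_def)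
next
  case (insert a A)
  then obtain f where f: "bij_betw f U U" "\<forall>b\<in>A. f b = g b" by auto
  have aU: "a \<in> U" "g a \<in> U" "f a \<in> U" using insert.prems f(1) bij_betwE by auto
  define f' where "f' = swp (f a) (g a) \<circ> f"
  have "bij_betw f' U U" unfolding f'_def using f(1) swp_bij[OF aU(3) aU(2)] bij_betw_trans by blast
  moreover have "\<forall>b\<in>insert a A. f' b = g b"
  proof
    fix b assume b: "b \<in> insert a A"
    show "f' b = g b"
    proof (cases "b = a")
      case True then show ?thesis by (simp add: f'_def swp_def)
    next
      case False
      then have bA: "b \<in> A" using b by auto
      have "g b \<noteq> g a" using insert.prems(2) bA insert.hyps(2) False by (auto simp: inj_on_def)
      moreover have "f b \<noteq> f a" using f(1) bA insert.prems(1) aU False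
        by (metis bij_betw_def inj_onD subsetD insertI2)
      ultimately show ?thesis using f(2) bA by (simp add: f'_def swp_def)
    qed
  qed
  ultimately show ?case by blast
qed

lemma Union_preds_Sep: "(\<Union>i<npred (Sep a b). X (Suc (k+i)) (preds (Sep a b) ! i)) =
  (\<Union>i<npred a. X (Suc (k+i)) (preds a ! i)) \<union> (\<Union>i<npred b. X (Suc (k + npred a + i)) (preds b ! i))"
  by (simp add: Union_lessThan_add nth_append add.assoc)

lemma emb_catoms: "exfree g \<Longrightarrow> catoms (emb w \<sigma> ch k g) =
   {(C,q,\<sigma> x) | C q x. (C,q,x) \<in> catoms g} \<union>
   (\<Union>i<npred g. catoms (ch (Suc (k+i)) (map \<sigma> (snd (preds g ! i)))))"
proof (induction g arbitrary: k)
  case (Sep a b)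
  then show ?case
    by (auto simp: Union_lessThan_add nth_append add.assoc)
qed auto

lemma emb_iatoms: "exfree g \<Longrightarrow> iatoms (emb w \<sigma> ch k g) =
   {(I, map \<sigma> xs) | I xs. (I,xs) \<in> iatoms g} \<union>
   (\<Union>i<npred g. iatoms (ch (Suc (k+i)) (map \<sigma> (snd (preds g ! i)))))"
proof (induction g arbitrary: k)
  case (Sep a b)
  then show ?case
    by (auto simp: Union_lessThan_add nth_append add.assoc)
qed auto

lemma emb_bv: "exfree g \<Longrightarrow> bv (emb w \<sigma> ch k g) =
   (\<Union>i<npred g. bv (ch (Suc (k+i)) (map \<sigma> (snd (preds g ! i)))))"
proof (induction g arbitrary: k)
  case (Sep a b)
  then show ?case
    by (auto simp: Union_lessThan_add nth_append add.assoc)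
qed auto

lemma emb_vars: "exfree g \<Longrightarrow> vars (emb w \<sigma> ch k g) \<subseteq>
   range \<sigma> \<union> (\<Union>i<npred g. vars (ch (Suc (k+i)) (map \<sigma> (snd (preds g ! i)))))"
proof (induction g arbitrary: k)
  case (Sep a b)
  have "vars (emb w \<sigma> ch k (Sep a b)) = vars (emb w \<sigma> ch k a) \<union> vars (emb w \<sigma> ch (k + npred a) b)" by simp
  also have "\<dots> \<subseteq> (range \<sigma> \<union> (\<Union>i<npred a. vars (ch (Suc (k+i)) (map \<sigma> (snd (preds a ! i)))))) \<union>
      (range \<sigma> \<union> (\<Union>i<npred b. vars (ch (Suc (k + npred a + i)) (map \<sigma> (snd (preds b ! i))))))"
    using Sep by (intro Un_mono) auto
  also have "\<dots> = range \<sigma> \<union> (\<Union>i<npred (Sep a b). vars (ch (Suc (k+i)) (map \<sigma> (snd (preds (Sep a b) ! i)))))"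
    using Union_preds_Sep[of "\<lambda>i p. vars (ch i (map \<sigma> (snd p)))" k a b] by auto
  finally show ?case .
qed auto

lemma emb_preds: "exfree g \<Longrightarrow> (\<forall>i<npred g. preds (ch (Suc (k+i)) (map \<sigma> (snd (preds g ! i)))) = []) \<Longrightarrow>
   preds (emb w \<sigma> ch k g) = []"
proof (induction g arbitrary: k)
  case (Sep a b)
  have "\<forall>i<npred a. preds (ch (Suc (k+i)) (map \<sigma> (snd (preds a ! i)))) = []"
  proof (intro allI impI)
    fix i assume "i < npred a"
    then show "preds (ch (Suc (k+i)) (map \<sigma> (snd (preds a ! i)))) = []"
      using Sep.prems(2)[rule_format, of i] by (simp add: nth_append)
  qed
  moreover have "\<forall>i<npred b. preds (ch (Suc ((k + npred a)+i)) (map \<sigma> (snd (preds b ! i)))) = []"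
  proof (intro allI impI)
    fix i assume "i < npred b"
    then show "preds (ch (Suc ((k + npred a)+i)) (map \<sigma> (snd (preds b ! i)))) = []"
      using Sep.prems(2)[rule_format, of "npred a + i"] by (simp add: nth_append add.assoc)
  qed
  ultimately show ?case using Sep by auto
qed auto

lemma emb_nocomp: "exfree g \<Longrightarrow> nocomp g \<Longrightarrow> (\<forall>i<npred g. nocomp (ch (Suc (k+i)) (map \<sigma> (snd (preds g ! i))))) \<Longrightarrow>
   nocomp (emb w \<sigma> ch k g)"
proof (induction g arbitrary: k)
  case (Sep a b)
  have "\<forall>i<npred a. nocomp (ch (Suc (k+i)) (map \<sigma> (snd (preds a ! i))))"
  proof (intro allI impI)
    fix i assume "i < npred a"
    then show "nocomp (ch (Suc (k+i)) (map \<sigma> (snd (preds a ! i))))"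
      using Sep.prems(3)[rule_format, of i] by (simp add: nth_append)
  qed
  moreover have "\<forall>i<npred b. nocomp (ch (Suc ((k + npred a)+i)) (map \<sigma> (snd (preds b ! i))))"
  proof (intro allI impI)
    fix i assume "i < npred b"
    then show "nocomp (ch (Suc ((k + npred a)+i)) (map \<sigma> (snd (preds b ! i))))"
      using Sep.prems(3)[rule_format, of "npred a + i"] by (simp add: nth_append add.assoc)
  qed
  ultimately show ?case using Sep by auto
qed auto

lemma emb_good:
  assumes "exfree g"
    and "\<forall>i<npred g. good (ch (Suc (k+i)) (map \<sigma> (snd (preds g ! i)))) \<and>
           bv (ch (Suc (k+i)) (map \<sigma> (snd (preds g ! i)))) \<subseteq> D (Suc (k+i)) \<and>
           vars (ch (Suc (k+i)) (map \<sigma> (snd (preds g ! i)))) \<subseteq> range \<sigma> \<union> D (Suc (k+i))"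
    and "\<forall>i j. i \<noteq> j \<longrightarrow> D i \<inter> D j = {}"
    and "\<forall>i. range \<sigma> \<inter> D i = {}"
  shows "good (emb w \<sigma> ch k g)"
  using assms
proof (induction g arbitrary: k)
  case (Sep a b)
  let ?H = "\<lambda>i a. good (ch i (map \<sigma> a)) \<and> bv (ch i (map \<sigma> a)) \<subseteq> D i \<and> vars (ch i (map \<sigma> a)) \<subseteq> range \<sigma> \<union> D i"
  have ha: "\<forall>i<npred a. ?H (Suc (k+i)) (snd (preds a ! i))"
  proof (intro allI impI)
    fix i assume "i < npred a"
    then show "?H (Suc (k+i)) (snd (preds a ! i))"
      using Sep.prems(2)[rule_format, of i] by (simp add: nth_append)
  qed
  have hb: "\<forall>i<npred b. ?H (Suc ((k + npred a)+i)) (snd (preds b ! i))"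
  proof (intro allI impI)
    fix i assume "i < npred b"
    then show "?H (Suc ((k + npred a)+i)) (snd (preds b ! i))"
      using Sep.prems(2)[rule_format, of "npred a + i"] by (simp add: nth_append add.assoc)
  qed
  have ga: "good (emb w \<sigma> ch k a)" using Sep.IH(1)[of k] ha Sep.prems(1,3,4) by simp
  have gb: "good (emb w \<sigma> ch (k + npred a) b)" using Sep.IH(2)[of "k + npred a"] hb Sep.prems(1,3,4) by simp
  let ?Da = "\<Union>i<npred a. D (Suc (k+i))"
  let ?Db = "\<Union>i<npred b. D (Suc ((k + npred a)+i))"
  have bva: "bv (emb w \<sigma> ch k a) \<subseteq> ?Da"
  proof -
    have "bv (emb w \<sigma> ch k a) = (\<Union>i<npred a. bv (ch (Suc (k+i)) (map \<sigma> (snd (preds a ! i)))))"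
      using emb_bv[of a w \<sigma> ch k] Sep.prems(1) by simp
    also have "\<dots> \<subseteq> ?Da" using ha by (intro UN_mono) auto
    finally show ?thesis .
  qed
  have bvb: "bv (emb w \<sigma> ch (k + npred a) b) \<subseteq> ?Db"
  proof -
    have "bv (emb w \<sigma> ch (k + npred a) b) = (\<Union>i<npred b. bv (ch (Suc ((k + npred a)+i)) (map \<sigma> (snd (preds b ! i)))))"
      using emb_bv[of b w \<sigma> ch "k + npred a"] Sep.prems(1) by simp
    also have "\<dots> \<subseteq> ?Db" using hb by (intro UN_mono) auto
    finally show ?thesis .
  qed
  have va: "vars (emb w \<sigma> ch k a) \<subseteq> range \<sigma> \<union> ?Da"
  proof -
    have "vars (emb w \<sigma> ch k a) \<subseteq> range \<sigma> \<union> (\<Union>i<npred a. vars (ch (Suc (k+i)) (map \<sigma> (snd (preds a ! i)))))"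
      using emb_vars[of a w \<sigma> ch k] Sep.prems(1) by simp
    also have "\<dots> \<subseteq> range \<sigma> \<union> (\<Union>i<npred a. range \<sigma> \<union> D (Suc (k+i)))" using ha by (intro Un_mono UN_mono) auto
    also have "\<dots> \<subseteq> range \<sigma> \<union> ?Da" by blast
    finally show ?thesis .
  qed
  have vb: "vars (emb w \<sigma> ch (k + npred a) b) \<subseteq> range \<sigma> \<union> ?Db"
  proof -
    have "vars (emb w \<sigma> ch (k + npred a) b) \<subseteq> range \<sigma> \<union> (\<Union>i<npred b. vars (ch (Suc ((k + npred a)+i)) (map \<sigma> (snd (preds b ! i)))))"
      using emb_vars[of b w \<sigma> ch "k + npred a"] Sep.prems(1) by simp
    also have "\<dots> \<subseteq> range \<sigma> \<union> (\<Union>i<npred b. range \<sigma> \<union> D (Suc ((k + npred a)+i)))" using hb by (intro Un_mono UN_mono) auto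
    also have "\<dots> \<subseteq> range \<sigma> \<union> ?Db" by blast
    finally show ?thesis .
  qed
  have dd: "\<And>i j z. i \<noteq> j \<Longrightarrow> z \<in> D i \<Longrightarrow> z \<in> D j \<Longrightarrow> False" using Sep.prems(3) by blast
  have dr: "\<And>i z. z \<in> range \<sigma> \<Longrightarrow> z \<in> D i \<Longrightarrow> False" using Sep.prems(4) by blast
  have dab: "?Da \<inter> ?Db = {}"
  proof (rule ccontr)
    assume "?Da \<inter> ?Db \<noteq> {}"
    then obtain z i i' where "i < npred a" "z \<in> D (Suc (k+i))" "z \<in> D (Suc ((k + npred a)+i'))" by blast
    then show False using dd[of "Suc (k+i)" "Suc ((k + npred a)+i')" z] by simp
  qed
  have ra: "range \<sigma> \<inter> ?Da = {}" using dr by blast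
  have rb: "range \<sigma> \<inter> ?Db = {}" using dr by blast
  have d1: "bv (emb w \<sigma> ch k a) \<inter> vars (emb w \<sigma> ch (k + npred a) b) = {}"
    using bva vb dab ra by blast
  have d2: "bv (emb w \<sigma> ch (k + npred a) b) \<inter> vars (emb w \<sigma> ch k a) = {}"
    using bvb va dab rb by blast
  show ?case using ga gb d1 d2 by simp
qed auto

definition valid :: "('c,'q,'i,'a,'v) form \<Rightarrow> 'v \<Rightarrow> nat \<Rightarrow> nat \<Rightarrow> bool" where
  "valid g x i j \<longleftrightarrow> 1 \<le> i \<and> i \<le> npred g \<and> j < length (snd (preds g ! (i - 1))) \<and> snd (preds g ! (i - 1)) ! j = x"

definition RS :: "'v list \<Rightarrow> ('c,'q,'i,'a,'v) form \<Rightarrow> 'v list \<Rightarrow> ('c,'q,'i,'a,'v) form \<Rightarrow> bool" where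
  "RS xs f ys g \<longleftrightarrow> f = exs ys g \<and> exfree g \<and> nocomp g \<and> distinct (xs @ ys) \<and>
     (\<forall>C q x. (C,q,x) \<in> catoms g \<longrightarrow> xs \<noteq> [] \<and> x = hd xs) \<and> (\<forall>a\<in>catoms g. \<forall>b\<in>catoms g. a = b) \<and>
     (\<forall>x i j i' j'. valid g x i j \<longrightarrow> valid g x i' j' \<longrightarrow> i = i' \<and> j = j') \<and>
     (\<forall>(B,zs) \<in> set (preds g). \<forall>z\<in>set zs. z \<in> set xs \<union> set ys \<and> \<not>(\<exists>C q. (C,q,z) \<in> catoms g)) \<and>
     (\<forall>x\<in>set xs. \<not>(\<exists>C q. (C,q,x) \<in> catoms g) \<longrightarrow> (\<exists>i j. valid g x i j))"

lemma preds_bigsep_pred: "preds (bigsep (map (\<lambda>(B, zs). Pred B zs) pas)) = pas"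
proof -
  have "concat (map preds (map (\<lambda>(B, zs). Pred B zs) pas)) = pas"
    by (induction pas) auto
  then show ?thesis by simp
qed

lemma catoms_bigsep_inter: "catoms (bigsep (map (\<lambda>(I, zs). Inter I zs) ps)) = {}"
  by (auto split: prod.splits)
lemma catoms_bigsep_pred: "catoms (bigsep (map (\<lambda>(I, zs). Pred I zs) ps)) = {}"
  by (auto split: prod.splits)
lemma preds_bigsep_inter: "preds (bigsep (map (\<lambda>(I, zs). Inter I zs) ps)) = []"
  by (induction ps) (auto split: prod.splits)
lemma exfree_bigsep_inter: "exfree (bigsep (map (\<lambda>(I, zs). Inter I zs) ps))"
  by (auto split: prod.splits)
lemma exfree_bigsep_pred: "exfree (bigsep (map (\<lambda>(I, zs). Pred I zs) ps))"
  by (auto split: prod.splits)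
lemma nocomp_bigsep_inter: "nocomp (bigsep (map (\<lambda>(I, zs). Inter I zs) ps))"
  by (auto split: prod.splits)
lemma nocomp_bigsep_pred: "nocomp (bigsep (map (\<lambda>(I, zs). Pred I zs) ps))"
  by (auto split: prod.splits)

lemma RS_I: "rule_I (A, xs, f) \<Longrightarrow> RS xs f [] f"
  unfolding rule_I_def RS_def valid_def by auto

lemma RS_II:
  assumes "rule_II (A, xs, f)"
  shows "\<exists>ys g. RS xs f ys g"
proof -
  from assms obtain ys \<phi> \<psi>s pas where r:
    "f = exs ys (Sep (Sep \<phi> (bigsep (map (\<lambda>(I, zs). Inter I zs) \<psi>s))) (bigsep (map (\<lambda>(B, zs). Pred B zs) pas)))"
    "distinct (xs @ ys)" "pas \<noteq> []" "\<phi> = Emp \<or> (\<exists>C q. xs \<noteq> [] \<and> \<phi> = CompSt C q (hd xs))"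
    and V: "\<forall>v \<in> (set xs - fv \<phi>) \<union> set ys. count_list (concat (map snd pas)) v = 1"
       "set (concat (map snd pas)) \<subseteq> (set xs - fv \<phi>) \<union> set ys"
    unfolding rule_II_def Let_def by auto
  define g where "g = Sep (Sep \<phi> (bigsep (map (\<lambda>(I, zs). Inter I zs) \<psi>s))) (bigsep (map (\<lambda>(B, zs). Pred B zs) pas))"
  have pg: "preds g = pas" unfolding g_def using r(4) by (auto simp del: bigsep_simps simp add: preds_bigsep_pred preds_bigsep_inter)
  have cg: "catoms g = catoms \<phi>" unfolding g_def by (auto split: prod.splits)
  have cphi: "\<And>C q x. (C,q,x) \<in> catoms \<phi> \<longleftrightarrow> x \<in> fv \<phi> \<and> (\<exists>C' q'. \<phi> = CompSt C' q' x \<and> C = C' \<and> q = q')"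
    using r(4) by auto
  have vmem: "\<And>x i j. valid g x i j \<Longrightarrow> x \<in> set (concat (map snd pas))"
    unfolding valid_def pg by (auto simp: set_concat) (metis Suc_le_eq Suc_pred nth_mem)
  have uniq: "\<forall>x i j i' j'. valid g x i j \<longrightarrow> valid g x i' j' \<longrightarrow> i = i' \<and> j = j'"
  proof (intro allI impI)
    fix x i j i' j' assume a: "valid g x i j" "valid g x i' j'"
    then have "count_list (concat (map snd pas)) x = 1" using vmem V by blast
    then have "i - 1 = i' - 1 \<and> j = j'"
      using a count_concat_unique[of "map snd pas" x "i - 1" j "i' - 1" j'] unfolding valid_def pg by auto
    then show "i = i' \<and> j = j'" using a unfolding valid_def by auto
  qed
  have c4: "\<forall>(B,zs) \<in> set (preds g). \<forall>z\<in>set zs. z \<in> set xs \<union> set ys \<and> \<not>(\<exists>C q. (C,q,z) \<in> catoms g)"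
  proof (intro ballI, clarify)
    fix B zs z assume "(B,zs) \<in> set (preds g)" "z \<in> set zs"
    then have "z \<in> set (concat (map snd pas))" unfolding pg by force
    then have "z \<in> (set xs - fv \<phi>) \<union> set ys" using V by blast
    moreover have "fv \<phi> \<subseteq> set xs" using r(4) by auto
    moreover have "set xs \<inter> set ys = {}" using r(2) by auto
    ultimately have "z \<in> set xs \<union> set ys" "z \<notin> fv \<phi>" by blast+
    then show "z \<in> set xs \<union> set ys \<and> \<not>(\<exists>C q. (C,q,z) \<in> catoms g)" unfolding cg using cphi by blast
  qed
  have c5: "\<forall>x\<in>set xs. \<not>(\<exists>C q. (C,q,x) \<in> catoms g) \<longrightarrow> (\<exists>i j. valid g x i j)"
  proof (intro ballI impI)
    fix x assume x: "x \<in> set xs" "\<not>(\<exists>C q. (C,q,x) \<in> catoms g)"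
    then have "x \<notin> fv \<phi>" using r(4) cg by auto
    then have "count_list (concat (map snd pas)) x = 1" using V x by blast
    then have "x \<in> set (concat (map snd pas))" using count_notin by (metis zero_neq_one)
    then obtain i j where "i < length (map snd pas)" "j < length (map snd pas ! i)" "map snd pas ! i ! j = x"
      using in_concat_nth by metis
    then have "valid g x (Suc i) j" unfolding valid_def pg by auto
    then show "\<exists>i j. valid g x i j" by blast
  qed
  have fe: "f = exs ys g" using r(1) g_def by simp
  have ef: "exfree \<phi>" "nocomp \<phi>" using r(4) by auto
  have eg: "exfree g" "nocomp g" unfolding g_def using ef
    by (simp_all del: bigsep_simps add: exfree_bigsep_inter exfree_bigsep_pred nocomp_bigsep_inter nocomp_bigsep_pred)
  have c2: "\<forall>C q x. (C,q,x) \<in> catoms g \<longrightarrow> xs \<noteq> [] \<and> x = hd xs" unfolding cg using r(4) by auto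
  have c3: "\<forall>a\<in>catoms g. \<forall>b\<in>catoms g. a = b" unfolding cg using r(4) by auto
  have "RS xs f ys g"
    unfolding RS_def using fe eg r(2) c2 c3 uniq c4 c5 by blast
  then show ?thesis by blast
qed

locale ctx =
  fixes P :: "'c \<Rightarrow> 'p set" and PI :: "'i \<Rightarrow> 'p list" and Q :: "'c \<Rightarrow> 'q set"
    and \<Delta> :: "('c,'q,'i,'a,'v) rule set" and ar :: "'a \<Rightarrow> nat" and \<kappa> :: nat
    and \<rho> :: "('c,'q,'i,'a,'v) rule" and T :: "('c,'q,'i,'a,'v) rtree" and prof :: "'a \<Rightarrow> 'c list"
  assumes sig: "wf_sig P PI Q" and sid: "wf_sid PI ar \<kappa> \<Delta>" and forms: "\<forall>r\<in>\<Delta>. rule_I r \<or> rule_II r"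
    and tight: "tight_sid_for P PI ar prof \<Delta>" and rt: "is_rtree \<Delta> \<kappa> \<rho> T"
begin

lemma rule_RS: "(A,xs,f) \<in> \<Delta> \<Longrightarrow> \<exists>ys g. RS xs f ys g"
proof -
  assume h: "(A,xs,f) \<in> \<Delta>"
  have "rule_I (A,xs,f) \<or> rule_II (A,xs,f)" using forms h by (rule bspec)
  then show ?thesis
  proof
    assume "rule_I (A,xs,f)" then have "RS xs f [] f" by (rule RS_I)
    then show ?thesis by (intro exI)
  next
    assume "rule_II (A,xs,f)" then show ?thesis by (rule RS_II)
  qed
qed

lemma node: "w \<in> dom T \<Longrightarrow> \<exists>A xs f. T w = Some (A,xs,f) \<and> (A,xs,f) \<in> \<Delta>"
proof -
  assume "w \<in> dom T"
  then obtain r where r: "T w = Some r" by blast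
  moreover have "r \<in> \<Delta>" using rt r unfolding is_rtree_def by blast
  ultimately show ?thesis by (cases r) auto
qed

abbreviation NN where "NN \<equiv> card (dom T)"

lemma len_bound: assumes u: "u \<in> dom T" shows "length u < NN"
proof -
  have fin: "finite (dom T)" using rt by (simp add: is_rtree_def)
  have pc: "\<And>w v. w @ v \<in> dom T \<Longrightarrow> w \<in> dom T" using rt unfolding is_rtree_def by blast
  have sub: "(\<lambda>k. take k u) ` {0..length u} \<subseteq> dom T"
  proof
    fix z assume "z \<in> (\<lambda>k. take k u) ` {0..length u}"
    then obtain k where "z = take k u" by blast
    then show "z \<in> dom T" using pc[of "take k u" "drop k u"] u by simp
  qed
  have inj: "inj_on (\<lambda>k. take k u) {0..length u}"
  proof (rule inj_onI)
    fix k k' assume "k \<in> {0..length u}" "k' \<in> {0..length u}" "take k u = take k' u"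
    then have "length (take k u) = length (take k' u)" by simp
    then show "k = k'" using \<open>k \<in> {0..length u}\<close> \<open>k' \<in> {0..length u}\<close> by simp
  qed
  have "card ((\<lambda>k. take k u) ` {0..length u}) = Suc (length u)"
    using card_image[OF inj] by simp
  moreover have "card ((\<lambda>k. take k u) ` {0..length u}) \<le> NN" using card_mono[OF fin sub] .
  ultimately show ?thesis by simp
qed

lemma child:
  assumes "T w = Some (A,xs,f)" "RS xs f ys g" "i < npred g"
  shows "w@[Suc i] \<in> dom T" "the (T (w@[Suc i])) \<in> \<Delta>"
    "fst (the (T (w@[Suc i]))) = fst (preds g ! i)"
    "length (rparams (the (T (w@[Suc i])))) = length (snd (preds g ! i))"
proof -
  have fe: "f = exs ys g" using assms(2) by (simp add: RS_def)
  have ch: "\<forall>j. w @ [j] \<in> dom T \<longleftrightarrow> 1 \<le> j \<and> j \<le> npred f" using rt assms(1) unfolding is_rtree_def by auto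
  then show d: "w@[Suc i] \<in> dom T" using assms(3) fe by simp
  then obtain r' where r': "T (w@[Suc i]) = Some r'" by blast
  have inD: "\<And>w r. T w = Some r \<Longrightarrow> r \<in> \<Delta>" using rt unfolding is_rtree_def by blast
  then show "the (T (w@[Suc i])) \<in> \<Delta>" using r' by simp
  have hh: "\<forall>w r. T w = Some r \<longrightarrow> (\<forall>i r'. 1 \<le> i \<longrightarrow> i \<le> npred (rbody r) \<longrightarrow> T (w @ [i]) = Some r' \<longrightarrow>
            fst r' = fst (preds (rbody r) ! (i - 1)))" using rt unfolding is_rtree_def by blast
  have "fst r' = fst (preds f ! (Suc i - 1))"
    using hh[rule_format, OF assms(1), of "Suc i" r'] r' assms(3) fe by simp
  then show hd: "fst (the (T (w@[Suc i]))) = fst (preds g ! i)" using r' fe by simp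
  obtain B xs' f' where r'': "r' = (B, xs', f')" by (metis prod_cases3)
  have "r' \<in> \<Delta>" using inD r' .
  then have l1: "length xs' = ar B" using sid r'' unfolding wf_sid_def by auto
  have "(A,xs,f) \<in> \<Delta>" using inD assms(1) .
  moreover have "preds g ! i \<in> set (preds f)" using fe assms(3) by simp
  ultimately have "length (snd (preds g ! i)) = ar (fst (preds g ! i))" using sid unfolding wf_sid_def by fastforce
  then show "length (rparams (the (T (w@[Suc i])))) = length (snd (preds g ! i))"
    using l1 hd r' r'' by simp
qed

lemma seps_catom:
  assumes "T w = Some (A,xs,f)" "RS xs f ys g" "(C,q,x) \<in> catoms g"
  shows "seps T (Suc n) w x = []"
proof -
  have fe: "f = exs ys g" using assms(2) by (simp add: RS_def)
  show ?thesis using assms(1,3) fe by (auto simp: Let_def)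
qed

lemma seps_step:
  assumes "T w = Some (A,xs,f)" "RS xs f ys g" "\<not>(\<exists>C q. (C,q,x) \<in> catoms g)" "valid g x i j"
  shows "seps T (Suc n) w x = i # seps T n (w@[i]) (rparams (the (T (w@[i]))) ! j)"
proof -
  have fe: "f = exs ys g" using assms(2) by (simp add: RS_def)
  have un: "\<And>i' j'. valid g x i' j' \<Longrightarrow> i' = i \<and> j' = j" using assms(2,4) unfolding RS_def by blast
  have s: "(SOME (i', j'). 1 \<le> i' \<and> i' \<le> npred f \<and> j' < length (snd (preds f ! (i' - 1))) \<and> snd (preds f ! (i' - 1)) ! j' = x) = (i, j)"
  proof (rule some_equality)
    show "case (i, j) of (i', j') \<Rightarrow> 1 \<le> i' \<and> i' \<le> npred f \<and> j' < length (snd (preds f ! (i' - 1))) \<and> snd (preds f ! (i' - 1)) ! j' = x"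
      using assms(4) fe unfolding valid_def by simp
  next
    fix p assume "case p of (i', j') \<Rightarrow> 1 \<le> i' \<and> i' \<le> npred f \<and> j' < length (snd (preds f ! (i' - 1))) \<and> snd (preds f ! (i' - 1)) ! j' = x"
    then show "p = (i, j)" using un fe unfolding valid_def by (cases p) auto
  qed
  show ?thesis using assms(1,3) fe s by (simp add: Let_def)
qed

lemma FI:
  assumes "w \<in> dom T" "x \<in> set (rparams (the (T w)))"
    "\<forall>v. w @ v \<in> dom T \<longrightarrow> length v < n" "\<forall>v. w @ v \<in> dom T \<longrightarrow> length v < m"
  shows "seps T n w x = seps T m w x"
  using assms
proof (induction n arbitrary: m w x)
  case 0
  then show ?case by (metis append_Nil2 not_less0 list.size(3))
next
  case (Suc n)
  obtain m' where m: "m = Suc m'" using Suc.prems(1,4) by (metis append_Nil2 not_less0 list.size(3) not0_implies_Suc)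
  obtain A xs f where T: "T w = Some (A,xs,f)" "(A,xs,f) \<in> \<Delta>" using node Suc.prems(1) by blast
  obtain ys g where RS: "RS xs f ys g" using rule_RS T(2) by blast
  have xs: "x \<in> set xs" using Suc.prems(2) T by simp
  show ?case
  proof (cases "\<exists>C q. (C,q,x) \<in> catoms g")
    case True
    then show ?thesis using seps_catom[OF T(1) RS] m by auto
  next
    case False
    then obtain i j where v: "valid g x i j" using RS xs unfolding RS_def by blast
    then obtain i0 where i0: "i = Suc i0" "i0 < npred g" unfolding valid_def by (cases i) auto
    have c: "w@[i] \<in> dom T" "length (rparams (the (T (w@[i])))) = length (snd (preds g ! i0))"
      using child[OF T(1) RS i0(2)] i0(1) by auto
    have jl: "j < length (snd (preds g ! i0))" using v i0 unfolding valid_def by simp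
    have p: "rparams (the (T (w@[i]))) ! j \<in> set (rparams (the (T (w@[i]))))" using c(2) jl by simp
    have f1: "\<forall>v. (w@[i]) @ v \<in> dom T \<longrightarrow> length v < n" using Suc.prems(3) by (metis append.assoc append_Cons append_Nil length_Cons Suc_less_eq)
    have f2: "\<forall>v. (w@[i]) @ v \<in> dom T \<longrightarrow> length v < m'" using Suc.prems(4) m by (metis append.assoc append_Cons append_Nil length_Cons Suc_less_eq)
    show ?thesis using seps_step[OF T(1) RS False v] m Suc.IH[OF c(1) p f1 f2] by simp
  qed
qed

end

definition sig :: "nat list \<Rightarrow> 'v list \<Rightarrow> 'v list \<Rightarrow> (nat list \<times> 'v) list \<Rightarrow> 'v \<Rightarrow> nat list \<times> 'v" where
  "sig w xs ys args v = (if v \<in> set ys then (w,v) else (case map_of (zip xs args) v of Some z \<Rightarrow> z | None \<Rightarrow> (w,v)))"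

lemma sig_param: "distinct (xs @ ys) \<Longrightarrow> length args = length xs \<Longrightarrow> j < length xs \<Longrightarrow> sig w xs ys args (xs!j) = args!j"
proof -
  assume a: "distinct (xs @ ys)" "length args = length xs" "j < length xs"
  then have "xs ! j \<in> set xs" by simp
  then have "xs ! j \<notin> set ys" using a(1) by auto
  moreover have "map_of (zip xs args) (xs!j) = Some (args!j)"
    using map_of_zip_nth[of xs args j] a by simp
  ultimately show ?thesis by (simp add: sig_def)
qed

lemma sig_ys: "v \<in> set ys \<Longrightarrow> sig w xs ys args v = (w,v)"
  by (simp add: sig_def)

lemma sig_range: "sig w xs ys args v \<in> set args \<or> sig w xs ys args v = (w,v)"
  unfolding sig_def by (auto split: option.splits dest: map_of_SomeD set_zip_rightD)

context ctx begin

lemma chi_unfold: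
  assumes "T w = Some (A,xs,f)" "RS xs f ys g"
  shows "chi_aux T (Suc n) w args = exs (map (Pair w) ys) (emb w (sig w xs ys args) (\<lambda>i a. chi_aux T n (w@[i]) a) 0 g)"
proof -
  have fe: "f = exs ys g" using assms(2) by (simp add: RS_def)
  show ?thesis using assms(1) fe by (simp add: Let_def emb_exs sig_def[abs_def])
qed

abbreviation Dw :: "nat list \<Rightarrow> (nat list \<times> 'v) set" where
  "Dw u \<equiv> {z. \<exists>v. fst z = u @ v}"

lemma M1:
  assumes "w \<in> dom T" "\<forall>v. w @ v \<in> dom T \<longrightarrow> length v < n" "\<forall>a\<in>set args. length (fst a) < length w"
  shows "preds (chi_aux T n w args) = [] \<and> nocomp (chi_aux T n w args) \<and> good (chi_aux T n w args) \<and>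
    bv (chi_aux T n w args) \<subseteq> Dw w \<and> vars (chi_aux T n w args) \<subseteq> set args \<union> Dw w"
  using assms
proof (induction n arbitrary: w args)
  case 0
  then show ?case by (metis append_Nil2 list.size(3) not_less0)
next
  case (Suc n)
  obtain A xs f where T: "T w = Some (A,xs,f)" "(A,xs,f) \<in> \<Delta>" using node Suc.prems(1) by blast
  obtain ys g where RS: "RS xs f ys g" using rule_RS T(2) by blast
  have ex: "exfree g" "nocomp g" using RS unfolding RS_def by auto
  define \<sigma> where "\<sigma> = sig w xs ys args"
  define ch where "ch = (\<lambda>i a. chi_aux T n (w@[i]) a)"
  define E where "E = emb w \<sigma> ch 0 g"
  have F: "chi_aux T (Suc n) w args = exs (map (Pair w) ys) E"
    unfolding E_def \<sigma>_def ch_def using chi_unfold[OF T(1) RS] .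
  have rs: "\<And>v. length (fst (\<sigma> v)) \<le> length w"
    using sig_range[of w xs ys args] Suc.prems(3) unfolding \<sigma>_def by (metis fst_conv less_imp_le order_refl)
  have rsD: "\<And>v. \<sigma> v \<in> set args \<union> Dw w"
    using sig_range[of w xs ys args] unfolding \<sigma>_def by fastforce
  have IH: "\<And>i. i < npred g \<Longrightarrow>
     preds (ch (Suc (0+i)) (map \<sigma> (snd (preds g ! i)))) = [] \<and> nocomp (ch (Suc (0+i)) (map \<sigma> (snd (preds g ! i)))) \<and>
     good (ch (Suc (0+i)) (map \<sigma> (snd (preds g ! i)))) \<and>
     bv (ch (Suc (0+i)) (map \<sigma> (snd (preds g ! i)))) \<subseteq> Dw (w@[Suc (0+i)]) \<and>
     vars (ch (Suc (0+i)) (map \<sigma> (snd (preds g ! i)))) \<subseteq> set (map \<sigma> (snd (preds g ! i))) \<union> Dw (w@[Suc (0+i)])"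
  proof -
    fix i assume i: "i < npred g"
    have c: "w@[Suc i] \<in> dom T" using child[OF T(1) RS i] by simp
    have fu: "\<forall>v. (w@[Suc i]) @ v \<in> dom T \<longrightarrow> length v < n"
      using Suc.prems(2) by (metis append.assoc append_Cons append_Nil length_Cons Suc_less_eq)
    have ar: "\<forall>a\<in>set (map \<sigma> (snd (preds g ! i))). length (fst a) < length (w@[Suc i])"
      using rs by (auto simp: le_imp_less_Suc)
    show "?thesis i" using Suc.IH[OF c fu ar] unfolding ch_def by simp
  qed
  have dd: "\<forall>i j. i \<noteq> j \<longrightarrow> Dw (w@[i]) \<inter> Dw (w@[j]) = {}" by auto
  have dr: "\<forall>i. range \<sigma> \<inter> Dw (w@[i]) = {}"
  proof (intro allI)
    fix i
    show "range \<sigma> \<inter> Dw (w@[i]) = {}"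
    proof (rule ccontr)
      assume "range \<sigma> \<inter> Dw (w@[i]) \<noteq> {}"
      then obtain v u where "fst (\<sigma> v) = (w@[i]) @ u" by auto
      then have "length (fst (\<sigma> v)) > length w" by simp
      then show False using rs[of v] by simp
    qed
  qed
  have pE: "preds E = []" unfolding E_def using emb_preds[OF ex(1)] IH by blast
  have nE: "nocomp E" unfolding E_def using emb_nocomp[OF ex] IH by blast
  have gE: "good E" unfolding E_def
  proof (rule emb_good[OF ex(1) _ dd dr])
    show "\<forall>i<npred g. good (ch (Suc (0 + i)) (map \<sigma> (snd (preds g ! i)))) \<and>
        bv (ch (Suc (0 + i)) (map \<sigma> (snd (preds g ! i)))) \<subseteq> Dw (w @ [Suc (0 + i)]) \<and>
        vars (ch (Suc (0 + i)) (map \<sigma> (snd (preds g ! i)))) \<subseteq> range \<sigma> \<union> Dw (w @ [Suc (0 + i)])"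
      using IH by fastforce
  qed
  have bE: "bv E \<subseteq> Dw w"
  proof -
    have "bv E = (\<Union>i<npred g. bv (ch (Suc (0+i)) (map \<sigma> (snd (preds g ! i)))))"
      unfolding E_def using emb_bv[OF ex(1)] .
    also have "\<dots> \<subseteq> (\<Union>i<npred g. Dw (w@[Suc (0+i)]))" using IH by (intro UN_mono) auto
    also have "\<dots> \<subseteq> Dw w" by auto
    finally show ?thesis .
  qed
  have vE: "vars E \<subseteq> set args \<union> Dw w"
  proof -
    have "vars E \<subseteq> range \<sigma> \<union> (\<Union>i<npred g. vars (ch (Suc (0+i)) (map \<sigma> (snd (preds g ! i)))))"
      unfolding E_def using emb_vars[OF ex(1)] .
    also have "\<dots> \<subseteq> range \<sigma> \<union> (\<Union>i<npred g. range \<sigma> \<union> Dw (w@[Suc (0+i)]))"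
      using IH by (intro Un_mono UN_mono order_refl) fastforce+
    also have "\<dots> \<subseteq> set args \<union> Dw w"
    proof -
      have r1: "range \<sigma> \<subseteq> set args \<union> Dw w" using rsD by blast
      have r2: "\<And>k. Dw (w@[k]) \<subseteq> Dw w" by (auto intro: exI[of _ "_ # _"])
      show ?thesis using r1 r2 by (intro Un_least UN_least) blast+
    qed
    finally show ?thesis .
  qed
  have yD: "set (map (Pair w) ys) \<subseteq> Dw w" by auto
  show ?case unfolding F using pE nE gE bE vE yD by auto
qed

end

context ctx begin

lemma NN_pos: "w \<in> dom T \<Longrightarrow> \<exists>N'. NN = Suc N'"
  using len_bound by (metis less_imp_Suc_add)

lemma M2:
  assumes "w \<in> dom T" "\<forall>v. w @ v \<in> dom T \<longrightarrow> length v < n" "length args = length (rparams (the (T w)))"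
    "\<forall>j<length args. sT T (args!j) = w @ seps T NN w (rparams (the (T w)) ! j)"
  shows "(\<forall>a\<in>catoms (chi_aux T n w args). sT T (snd (snd a)) \<in> dom T \<and> (\<exists>v. sT T (snd (snd a)) = w @ v)) \<and>
     (\<forall>a\<in>catoms (chi_aux T n w args). \<forall>b\<in>catoms (chi_aux T n w args).
        sT T (snd (snd a)) = sT T (snd (snd b)) \<longrightarrow> a = b)"
  using assms
proof (induction n arbitrary: w args)
  case 0
  then show ?case by (metis append_Nil2 list.size(3) not_less0)
next
  case (Suc n)
  obtain A xs f where T: "T w = Some (A,xs,f)" "(A,xs,f) \<in> \<Delta>" using node Suc.prems(1) by blast
  obtain ys g where RS: "RS xs f ys g" using rule_RS T(2) by blast
  have ex: "exfree g" using RS unfolding RS_def by auto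
  have dist: "distinct (xs @ ys)" using RS unfolding RS_def by auto
  obtain N' where N': "NN = Suc N'" using NN_pos Suc.prems(1) by blast
  define \<sigma> where "\<sigma> = sig w xs ys args"
  define ch where "ch = (\<lambda>i a. chi_aux T n (w@[i]) a)"
  define L where "L = (\<lambda>a::('c \<times> 'q \<times> nat list \<times> 'v). sT T (snd (snd a)))"
  have F: "chi_aux T (Suc n) w args = exs (map (Pair w) ys) (emb w \<sigma> ch 0 g)"
    unfolding \<sigma>_def ch_def using chi_unfold[OF T(1) RS] .
  have la: "length args = length xs" using Suc.prems(3) T by simp
  have loc: "\<And>z. z \<in> set xs \<union> set ys \<Longrightarrow> sT T (\<sigma> z) = w @ seps T NN w z"
  proof -
    fix z assume z: "z \<in> set xs \<union> set ys"
    show "sT T (\<sigma> z) = w @ seps T NN w z"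
    proof (cases "z \<in> set ys")
      case True
      then show ?thesis unfolding \<sigma>_def by (simp add: sig_ys sT_def)
    next
      case False
      then obtain j where j: "j < length xs" "z = xs ! j" using z by (auto simp: in_set_conv_nth)
      have "\<sigma> z = args ! j" unfolding \<sigma>_def j(2) using sig_param[OF dist la j(1)] .
      then show ?thesis using Suc.prems(4) j la T by simp
    qed
  qed
  define S0 where "S0 = {(C,q,\<sigma> x) | C q x. (C,q,x) \<in> catoms g}"
  define S where "S = (\<lambda>i. catoms (ch (Suc (0+i)) (map \<sigma> (snd (preds g ! i)))))"
  have cF: "catoms (chi_aux T (Suc n) w args) = S0 \<union> (\<Union>i<npred g. S i)"
    unfolding F S0_def S_def using emb_catoms[OF ex] by simp
  have S0w: "\<forall>a\<in>S0. L a = w"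
  proof
    fix a assume "a \<in> S0"
    then obtain C q x where a: "a = (C,q,\<sigma> x)" "(C,q,x) \<in> catoms g" unfolding S0_def by blast
    have "xs \<noteq> [] \<and> x = hd xs" using RS a(2) unfolding RS_def by blast
    then have "x \<in> set xs" by simp
    then have "sT T (\<sigma> x) = w @ seps T NN w x" using loc by blast
    also have "seps T NN w x = []" using seps_catom[OF T(1) RS a(2)] N' by simp
    finally show "L a = w" unfolding L_def a(1) by simp
  qed
  have S0u: "\<forall>a\<in>S0. \<forall>b\<in>S0. a = b"
  proof (intro ballI)
    fix a b assume "a \<in> S0" "b \<in> S0"
    then obtain C q x C' q' x' where "a = (C,q,\<sigma> x)" "(C,q,x) \<in> catoms g" "b = (C',q',\<sigma> x')" "(C',q',x') \<in> catoms g"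
      unfolding S0_def by blast
    moreover have "(C,q,x) = (C',q',x')" using RS calculation unfolding RS_def by blast
    ultimately show "a = b" by simp
  qed
  have Si: "\<And>i. i < npred g \<Longrightarrow> (\<forall>a\<in>S i. L a \<in> dom T \<and> (\<exists>v. L a = (w @ [Suc i]) @ v)) \<and>
      (\<forall>a\<in>S i. \<forall>b\<in>S i. L a = L b \<longrightarrow> a = b)"
  proof -
    fix i assume i: "i < npred g"
    define c where "c = w @ [Suc i]"
    define zs where "zs = snd (preds g ! i)"
    have c: "c \<in> dom T" "length (rparams (the (T c))) = length zs"
      using child[OF T(1) RS i] unfolding c_def zs_def by auto
    have fu: "\<forall>v. c @ v \<in> dom T \<longrightarrow> length v < n"
      using Suc.prems(2) unfolding c_def by (metis append.assoc append_Cons append_Nil length_Cons Suc_less_eq)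
    have lc: "length (map \<sigma> zs) = length (rparams (the (T c)))" using c(2) by simp
    have inv: "\<forall>l<length (map \<sigma> zs). sT T (map \<sigma> zs ! l) = c @ seps T NN c (rparams (the (T c)) ! l)"
    proof (intro allI impI)
      fix l assume l: "l < length (map \<sigma> zs)"
      then have l': "l < length zs" by simp
      have pin: "preds g ! i \<in> set (preds g)" using i by simp
      have zin: "zs ! l \<in> set zs" using l' by simp
      have zz: "zs ! l \<in> set xs \<union> set ys \<and> \<not>(\<exists>C q. (C,q,zs!l) \<in> catoms g)"
        using RS pin zin unfolding RS_def zs_def by (cases "preds g ! i") fastforce
      have v: "valid g (zs!l) (Suc i) l" unfolding valid_def zs_def using i l' zs_def by simp
      have "sT T (map \<sigma> zs ! l) = w @ seps T NN w (zs ! l)" using loc zz l' by simp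
      also have "seps T NN w (zs ! l) = Suc i # seps T N' c (rparams (the (T c)) ! l)"
        using seps_step[OF T(1) RS _ v] zz N' unfolding c_def by simp
      also have "seps T N' c (rparams (the (T c)) ! l) = seps T NN c (rparams (the (T c)) ! l)"
      proof (rule FI[OF c(1)])
        show "rparams (the (T c)) ! l \<in> set (rparams (the (T c)))" using c(2) l' by simp
        show "\<forall>v. c @ v \<in> dom T \<longrightarrow> length v < N'"
        proof (intro allI impI)
          fix v assume "c @ v \<in> dom T"
          then have "length (c @ v) < NN" by (rule len_bound)
          then show "length v < N'" using N' unfolding c_def by simp
        qed
        show "\<forall>v. c @ v \<in> dom T \<longrightarrow> length v < NN"
        proof (intro allI impI)
          fix v assume "c @ v \<in> dom T"
          then have "length (c @ v) < NN" by (rule len_bound)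
          then show "length v < NN" by simp
        qed
      qed
      finally show "sT T (map \<sigma> zs ! l) = c @ seps T NN c (rparams (the (T c)) ! l)" unfolding c_def by simp
    qed
    have "S i = catoms (chi_aux T n c (map \<sigma> zs))" unfolding S_def ch_def c_def zs_def by simp
    then show "?thesis i" using Suc.IH[OF c(1) fu lc inv] unfolding L_def c_def by auto
  qed
  have P1: "\<forall>a\<in>S0 \<union> (\<Union>i<npred g. S i). L a \<in> dom T \<and> (\<exists>v. L a = w @ v)"
  proof
    fix a assume "a \<in> S0 \<union> (\<Union>i<npred g. S i)"
    then show "L a \<in> dom T \<and> (\<exists>v. L a = w @ v)"
    proof
      assume "a \<in> S0" then show ?thesis using S0w Suc.prems(1) by auto
    next
      assume "a \<in> (\<Union>i<npred g. S i)"
      then obtain i where "i < npred g" "a \<in> S i" by blast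
      then show ?thesis using Si by fastforce
    qed
  qed
  have P2: "\<forall>a\<in>S0 \<union> (\<Union>i<npred g. S i). \<forall>b\<in>S0 \<union> (\<Union>i<npred g. S i). L a = L b \<longrightarrow> a = b"
  proof (intro ballI impI)
    fix a b assume a: "a \<in> S0 \<union> (\<Union>i<npred g. S i)" and b: "b \<in> S0 \<union> (\<Union>i<npred g. S i)" and e: "L a = L b"
    have nw: "\<And>i x. i < npred g \<Longrightarrow> x \<in> S i \<Longrightarrow> L x \<noteq> w"
    proof
      fix i x assume "i < npred g" "x \<in> S i" "L x = w"
      then obtain v where "L x = (w @ [Suc i]) @ v" using Si by blast
      then show False using \<open>L x = w\<close> by simp
    qed
    show "a = b"
    proof (cases "a \<in> S0")
      case True
      show ?thesis
      proof (cases "b \<in> S0")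
        case True then show ?thesis using \<open>a \<in> S0\<close> S0u by blast
      next
        case False
        then obtain i where "i < npred g" "b \<in> S i" using b by blast
        then show ?thesis using nw[of i b] S0w \<open>a \<in> S0\<close> e by auto
      qed
    next
      case False
      then obtain i where i: "i < npred g" "a \<in> S i" using a by blast
      show ?thesis
      proof (cases "b \<in> S0")
        case True then show ?thesis using nw[of i a] S0w i e by auto
      next
        case False
        then obtain i' where i': "i' < npred g" "b \<in> S i'" using b by blast
        obtain v where v: "L a = (w @ [Suc i]) @ v" using Si i by blast
        obtain v' where v': "L b = (w @ [Suc i']) @ v'" using Si i' by blast
        have "i = i'" using v v' e by simp
        then show ?thesis using Si i i' e by blast
      qed
    qed
  qed
  show ?case using P1 P2 cF unfolding L_def by simp
qed

end

context ctx begin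

lemma comp_of_eq: "p \<in> P C \<Longrightarrow> comp_of P p = C"
  unfolding comp_of_def
proof (rule the_equality)
  fix C' assume "p \<in> P C" "p \<in> P C'"
  then show "C' = C" using sig unfolding wf_sig_def by blast
qed

lemma M3:
  assumes "w \<in> dom T" "\<forall>v. w @ v \<in> dom T \<longrightarrow> length v < n" "length args = length (rparams (the (T w)))"
  shows "(\<forall>j<length args. \<exists>q. (prof (fst (the (T w))) ! j, q, args!j) \<in> catoms (chi_aux T n w args)) \<and>
     (\<forall>I xs. (I,xs) \<in> iatoms (chi_aux T n w args) \<longrightarrow> length xs = length (PI I) \<and>
        (\<forall>j<length xs. \<exists>q. (comp_of P (PI I ! j), q, xs!j) \<in> catoms (chi_aux T n w args)))"
  using assms
proof (induction n arbitrary: w args)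
  case 0
  then show ?case by (metis append_Nil2 list.size(3) not_less0)
next
  case (Suc n)
  obtain A xs f where T: "T w = Some (A,xs,f)" "(A,xs,f) \<in> \<Delta>" using node Suc.prems(1) by blast
  obtain ys g where RS: "RS xs f ys g" using rule_RS T(2) by blast
  have ex: "exfree g" using RS unfolding RS_def by auto
  have dist: "distinct (xs @ ys)" using RS unfolding RS_def by auto
  have fe: "f = exs ys g" using RS unfolding RS_def by auto
  define \<sigma> where "\<sigma> = sig w xs ys args"
  define ch where "ch = (\<lambda>i a. chi_aux T n (w@[i]) a)"
  have F: "chi_aux T (Suc n) w args = exs (map (Pair w) ys) (emb w \<sigma> ch 0 g)"
    unfolding \<sigma>_def ch_def using chi_unfold[OF T(1) RS] .
  have la: "length args = length xs" using Suc.prems(3) T by simp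
  define S0 where "S0 = {(C,q,\<sigma> x) | C q x. (C,q,x) \<in> catoms g}"
  define S where "S = (\<lambda>i. catoms (ch (Suc (0+i)) (map \<sigma> (snd (preds g ! i)))))"
  define I0 where "I0 = {(I, map \<sigma> xs) | I xs. (I,xs) \<in> iatoms g}"
  define II where "II = (\<lambda>i. iatoms (ch (Suc (0+i)) (map \<sigma> (snd (preds g ! i)))))"
  define FF where "FF = chi_aux T (Suc n) w args"
  have cF: "catoms FF = S0 \<union> (\<Union>i<npred g. S i)"
    unfolding FF_def F S0_def S_def using emb_catoms[OF ex] by simp
  have iF: "iatoms FF = I0 \<union> (\<Union>i<npred g. II i)"
    unfolding FF_def F I0_def II_def using emb_iatoms[OF ex] by simp
  have tf: "tight_form P PI prof f"
    and hp: "\<forall>j<length xs. (\<exists>q. (prof A ! j, q, xs ! j) \<in> catoms f) \<or>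
           (\<exists>B ys l. (B, ys) \<in> set (preds f) \<and> l < length ys \<and> ys ! l = xs ! j \<and> prof B ! l = prof A ! j)"
    using bspec[OF tight[unfolded tight_sid_for_def, THEN conjunct2] T(2)] by auto
  have IHc: "\<And>i. i < npred g \<Longrightarrow>
     (\<forall>l<length (snd (preds g ! i)). \<exists>q. (prof (fst (preds g ! i)) ! l, q, \<sigma> (snd (preds g ! i) ! l)) \<in> S i) \<and>
     (\<forall>I xs. (I,xs) \<in> II i \<longrightarrow> length xs = length (PI I) \<and>
        (\<forall>j<length xs. \<exists>q. (comp_of P (PI I ! j), q, xs!j) \<in> S i))"
  proof -
    fix i assume i: "i < npred g"
    define c where "c = w @ [Suc i]"
    define zs where "zs = snd (preds g ! i)"
    have c: "c \<in> dom T" "length (rparams (the (T c))) = length zs" "fst (the (T c)) = fst (preds g ! i)"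
      using child[OF T(1) RS i] unfolding c_def zs_def by auto
    have fu: "\<forall>v. c @ v \<in> dom T \<longrightarrow> length v < n"
      using Suc.prems(2) unfolding c_def by (metis append.assoc append_Cons append_Nil length_Cons Suc_less_eq)
    have lc: "length (map \<sigma> zs) = length (rparams (the (T c)))" using c(2) by simp
    have e1: "S i = catoms (chi_aux T n c (map \<sigma> zs))" unfolding S_def ch_def c_def zs_def by simp
    have e2: "II i = iatoms (chi_aux T n c (map \<sigma> zs))" unfolding II_def ch_def c_def zs_def by simp
    show "?thesis i" using Suc.IH[OF c(1) fu lc] c(3) unfolding e1 e2 zs_def by auto
  qed
  have Ssub: "\<And>i. i < npred g \<Longrightarrow> S i \<subseteq> catoms FF" using cF by blast
  have S0sub: "S0 \<subseteq> catoms FF" using cF by blast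
  have predcase: "\<And>B ys' l. (B, ys') \<in> set (preds f) \<Longrightarrow> l < length ys' \<Longrightarrow>
      \<exists>q. (prof B ! l, q, \<sigma> (ys' ! l)) \<in> catoms FF"
  proof -
    fix B ys' l assume a: "(B, ys') \<in> set (preds f)" "l < length ys'"
    then obtain i where i: "i < npred g" "preds g ! i = (B, ys')" using fe by (auto simp: in_set_conv_nth)
    have "\<exists>q. (prof B ! l, q, \<sigma> (ys' ! l)) \<in> S i" using IHc[OF i(1)] i(2) a(2) by simp
    then show "\<exists>q. (prof B ! l, q, \<sigma> (ys' ! l)) \<in> catoms FF" using Ssub[OF i(1)] by blast
  qed
  have part1: "\<forall>j<length args. \<exists>q. (prof A ! j, q, args!j) \<in> catoms FF"
  proof (intro allI impI)
    fix j assume j: "j < length args"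
    then have j': "j < length xs" using la by simp
    have sj: "\<sigma> (xs ! j) = args ! j" unfolding \<sigma>_def using sig_param[OF dist la j'] .
    from hp j' show "\<exists>q. (prof A ! j, q, args!j) \<in> catoms FF"
    proof (elim allE impE disjE exE conjE)
      fix q assume "(prof A ! j, q, xs ! j) \<in> catoms f"
      then have "(prof A ! j, q, \<sigma> (xs ! j)) \<in> S0" unfolding S0_def fe by auto
      then show ?thesis using S0sub sj by auto
    next
      fix B ys' l assume "(B, ys') \<in> set (preds f)" "l < length ys'" "ys' ! l = xs ! j" "prof B ! l = prof A ! j"
      then show ?thesis using predcase[of B ys' l] sj by auto
    qed simp
  qed
  have part2: "\<forall>I xs'. (I,xs') \<in> iatoms FF \<longrightarrow> length xs' = length (PI I) \<and>
        (\<forall>j<length xs'. \<exists>q. (comp_of P (PI I ! j), q, xs'!j) \<in> catoms FF)"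
  proof (intro allI impI)
    fix I xs' assume "(I,xs') \<in> iatoms FF"
    then have "(I,xs') \<in> I0 \<or> (\<exists>i<npred g. (I,xs') \<in> II i)" using iF by blast
    then show "length xs' = length (PI I) \<and> (\<forall>j<length xs'. \<exists>q. (comp_of P (PI I ! j), q, xs'!j) \<in> catoms FF)"
    proof
      assume "(I,xs') \<in> I0"
      then obtain zs where z: "xs' = map \<sigma> zs" "(I,zs) \<in> iatoms g" unfolding I0_def by blast
      have zf: "(I,zs) \<in> iatoms f" using z(2) fe by simp
      have "\<forall>(I, ys)\<in>iatoms f. length ys = length (PI I)"
        using bspec[OF sid[unfolded wf_sid_def, THEN conjunct2] T(2)] by simp
      then have len: "length zs = length (PI I)" using zf by auto
      have "\<forall>j<length zs. \<exists>q. (comp_of P (PI I ! j), q, \<sigma> (zs!j)) \<in> catoms FF"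
      proof (intro allI impI)
        fix j assume j: "j < length zs"
        have "(\<exists>C q. (C, q, zs ! j) \<in> catoms f \<and> PI I ! j \<in> P C) \<or>
              (\<exists>A ys l. (A, ys) \<in> set (preds f) \<and> l < length ys \<and> ys ! l = zs ! j \<and> PI I ! j \<in> P (prof A ! l))"
          using bspec[OF tf[unfolded tight_form_def] zf] j by simp
        then show "\<exists>q. (comp_of P (PI I ! j), q, \<sigma> (zs!j)) \<in> catoms FF"
        proof (elim disjE exE conjE)
          fix C q assume "(C, q, zs ! j) \<in> catoms f" "PI I ! j \<in> P C"
          then have "(C, q, \<sigma> (zs ! j)) \<in> S0" "comp_of P (PI I ! j) = C" unfolding S0_def fe
            using comp_of_eq by auto
          then show ?thesis using S0sub by auto
        next
          fix B ys' l assume "(B, ys') \<in> set (preds f)" "l < length ys'" "ys' ! l = zs ! j" "PI I ! j \<in> P (prof B ! l)"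
          then show ?thesis using predcase[of B ys' l] comp_of_eq[of "PI I ! j" "prof B ! l"] by auto
        qed
      qed
      then show ?thesis using z(1) len by simp
    next
      assume "\<exists>i<npred g. (I,xs') \<in> II i"
      then obtain i where i: "i < npred g" "(I,xs') \<in> II i" by blast
      have h: "length xs' = length (PI I) \<and> (\<forall>j<length xs'. \<exists>q. (comp_of P (PI I ! j), q, xs'!j) \<in> S i)"
        using IHc[OF i(1)] i(2) by blast
      then show ?thesis using Ssub[OF i(1)] by blast
    qed
  qed
  have fA: "fst (the (T w)) = A" using T(1) by simp
  show ?case unfolding FF_def[symmetric] fA using part1 part2 by blast
qed

end

theorem mainTheorem8:
  fixes P :: "'c::finite \<Rightarrow> 'p set" and PI :: "'i \<Rightarrow> 'p list" and Q :: "'c \<Rightarrow> 'q set"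
    and \<Delta> :: "('c,'q,'i,'a,'v) rule set" and ar :: "'a \<Rightarrow> nat" and \<kappa> :: nat
    and A\<phi> :: 'a and \<phi> :: "('c,'q,'i,'a,'v) form"
    and T :: "('c,'q,'i,'a,'v) rtree"
    and s :: "nat list \<times> 'v \<Rightarrow> nat list" and c :: "('c,'i,'q,nat list) cfg"
  assumes "wf_sig P PI Q"
    and "wf_sid PI ar \<kappa> \<Delta>"
    and "\<forall>r \<in> \<Delta>. rule_I r \<or> rule_II r"
    and "\<exists>prof. tight_sid_for P PI ar prof \<Delta> \<and> tight_form P PI prof \<phi>"
    and "fv \<phi> = {}"
    and "(A\<phi>, [], \<phi>) \<in> \<Delta>"
    and "is_rtree \<Delta> \<kappa> (A\<phi>, [], \<phi>) T"
    and "\<forall>v. s v \<in> Univ \<kappa>"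
    and "is_config PI Q (Univ \<kappa>) c"
    and "sat (lift_sid \<Delta>) Q (Univ \<kappa>) s (chi T) c"
  shows "sym_cfg P PI Q (Univ \<kappa>) c (canon T)"
proof -
  obtain prof where pr: "tight_sid_for P PI ar prof \<Delta>" using assms(4) by blast
  interpret ctx P PI Q \<Delta> ar \<kappa> "(A\<phi>, [], \<phi>)" T prof
    using assms(1,2,3,7) pr by unfold_locales
  have root: "T [] = Some (A\<phi>,[],\<phi>)" using assms(7) unfolding is_rtree_def by blast
  have r0: "[] \<in> dom T" using root by blast
  have fuel: "\<forall>v. [] @ v \<in> dom T \<longrightarrow> length v < NN" using len_bound by simp
  define F where "F = chi T"
  have Fdef: "F = chi_aux T NN [] []" unfolding F_def chi_def using root by simp
  have m1: "preds F = []" "nocomp F" "good F" using M1[OF r0 fuel, of "[]"] unfolding Fdef by auto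
  have m2: "\<forall>a\<in>catoms F. sT T (snd (snd a)) \<in> dom T"
     "\<forall>a\<in>catoms F. \<forall>b\<in>catoms F. sT T (snd (snd a)) = sT T (snd (snd b)) \<longrightarrow> a = b"
    using M2[OF r0 fuel, of "[]"] root unfolding Fdef by auto
  have m3: "\<forall>I xs. (I,xs) \<in> iatoms F \<longrightarrow> length xs = length (PI I) \<and>
        (\<forall>j<length xs. \<exists>q. (comp_of P (PI I ! j), q, xs!j) \<in> catoms F)"
    using M3[OF r0 fuel, of "[]"] root unfolding Fdef by auto
  have sat: "sat (lift_sid \<Delta>) Q (Univ \<kappa>) s F c" using assms(10) unfolding F_def .
  obtain s' where L: "\<forall>x. x \<notin> bv F \<longrightarrow> s' x = s x" "\<forall>x. s' x \<in> Univ \<kappa>" "c = model s' F"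
     "\<forall>C q x q' y. (C,q,x) \<in> catoms F \<longrightarrow> (C,q',y) \<in> catoms F \<longrightarrow> s' x = s' y \<longrightarrow> x = y"
     "\<forall>C q x. (C,q,x) \<in> catoms F \<longrightarrow> q \<in> Q C"
    using L1[OF sat m1 assms(8)] by blast
  have domU: "dom T \<subseteq> Univ \<kappa>" using assms(7) unfolding is_rtree_def by blast
  define AC where "AC = (\<lambda>C. {s' x | q x. (C,q,x) \<in> catoms F})"
  define g where "g = (\<lambda>C u. sT T (SOME x. \<exists>q. (C,q,x) \<in> catoms F \<and> s' x = u))"
  have gval: "\<And>C q x. (C,q,x) \<in> catoms F \<Longrightarrow> g C (s' x) = sT T x"
  proof -
    fix C q x assume a: "(C,q,x) \<in> catoms F"
    define x' where "x' = (SOME x'. \<exists>q. (C,q,x') \<in> catoms F \<and> s' x' = s' x)"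
    have "\<exists>q. (C,q,x') \<in> catoms F \<and> s' x' = s' x" unfolding x'_def by (rule someI) (use a in blast)
    then have "x' = x" using L(4) a by blast
    then show "g C (s' x) = sT T x" unfolding g_def x'_def by simp
  qed
  have ext: "\<forall>C. \<exists>h. bij_betw h (Univ \<kappa>) (Univ \<kappa>) \<and> (\<forall>a\<in>AC C. h a = g C a)"
  proof
    fix C
    have fin: "finite (AC C)"
    proof -
      have "AC C \<subseteq> (\<lambda>a. s' (snd (snd a))) ` catoms F" unfolding AC_def by force
      then show ?thesis using catoms_finite finite_subset by blast
    qed
    have sub: "AC C \<subseteq> Univ \<kappa>" unfolding AC_def using L(2) by blast
    have inj: "inj_on (g C) (AC C)"
    proof (rule inj_onI)
      fix u u' assume u: "u \<in> AC C" "u' \<in> AC C" "g C u = g C u'"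
      then obtain q x q' y where xy: "u = s' x" "(C,q,x) \<in> catoms F" "u' = s' y" "(C,q',y) \<in> catoms F"
        unfolding AC_def by blast
      have "sT T x = sT T y" using u(3) xy gval by metis
      then have "(C,q,x) = (C,q',y)" using m2(2) xy(2,4) by fastforce
      then show "u = u'" using xy by simp
    qed
    have im: "g C ` AC C \<subseteq> Univ \<kappa>"
    proof
      fix z assume "z \<in> g C ` AC C"
      then obtain q x where "z = g C (s' x)" "(C,q,x) \<in> catoms F" unfolding AC_def by blast
      then have "z = sT T x" "sT T x \<in> dom T" using gval m2(1) by fastforce+
      then show "z \<in> Univ \<kappa>" using domU by blast
    qed
    show "\<exists>h. bij_betw h (Univ \<kappa>) (Univ \<kappa>) \<and> (\<forall>a\<in>AC C. h a = g C a)"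
      using extend_bij[OF fin sub inj im] .
  qed
  obtain f where f: "\<forall>C. bij_betw (f C) (Univ \<kappa>) (Univ \<kappa>) \<and> (\<forall>a\<in>AC C. f C a = g C a)"
    using choice[OF ext] by blast
  have fval: "\<And>C q x. (C,q,x) \<in> catoms F \<Longrightarrow> f C (s' x) = sT T x"
  proof -
    fix C q x assume a: "(C,q,x) \<in> catoms F"
    then have "s' x \<in> AC C" unfolding AC_def by blast
    then show "f C (s' x) = sT T x" using f gval[OF a] by simp
  qed
  have Qdis: "\<And>C C' q. q \<in> Q C \<Longrightarrow> q \<in> Q C' \<Longrightarrow> C = C'"
    using assms(1) unfolding wf_sig_def by blast
  have c1: "(\<lambda>C. f C ` {s' x | q x. (C,q,x) \<in> catoms F}) = (\<lambda>C. {sT T x | q x. (C,q,x) \<in> catoms F})"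
  proof
    fix C
    show "f C ` {s' x | q x. (C,q,x) \<in> catoms F} = {sT T x | q x. (C,q,x) \<in> catoms F}"
      using fval by (auto simp: image_iff) (metis fval)+
  qed
  have mapeq: "\<And>I xs. (I,xs) \<in> iatoms F \<Longrightarrow>
     map (\<lambda>(p, u). f (comp_of P p) u) (zip (PI I) (map s' xs)) = map (sT T) xs"
  proof -
    fix I xs assume a: "(I,xs) \<in> iatoms F"
    then have len: "length xs = length (PI I)" using m3 by blast
    show "map (\<lambda>(p, u). f (comp_of P p) u) (zip (PI I) (map s' xs)) = map (sT T) xs"
    proof (rule nth_equalityI)
      show "length (map (\<lambda>(p, u). f (comp_of P p) u) (zip (PI I) (map s' xs))) = length (map (sT T) xs)"
        using len by simp
    next
      fix j assume "j < length (map (\<lambda>(p, u). f (comp_of P p) u) (zip (PI I) (map s' xs)))"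
      then have j: "j < length xs" using len by simp
      then obtain q where "(comp_of P (PI I ! j), q, xs!j) \<in> catoms F" using m3 a by blast
      then have "f (comp_of P (PI I ! j)) (s' (xs ! j)) = sT T (xs ! j)" by (rule fval)
      then show "map (\<lambda>(p, u). f (comp_of P p) u) (zip (PI I) (map s' xs)) ! j = map (sT T) xs ! j"
        using j len by simp
    qed
  qed
  have c2: "(\<lambda>I. (\<lambda>us. map (\<lambda>(p, u). f (comp_of P p) u) (zip (PI I) us)) ` {map s' xs | xs. (I,xs) \<in> iatoms F})
      = (\<lambda>I. {map (sT T) xs | xs. (I,xs) \<in> iatoms F})"
  proof
    fix I
    show "(\<lambda>us. map (\<lambda>(p, u). f (comp_of P p) u) (zip (PI I) us)) ` {map s' xs | xs. (I,xs) \<in> iatoms F}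
        = {map (sT T) xs | xs. (I,xs) \<in> iatoms F}"
    proof (rule set_eqI)
      fix z
      show "z \<in> (\<lambda>us. map (\<lambda>(p, u). f (comp_of P p) u) (zip (PI I) us)) ` {map s' xs | xs. (I,xs) \<in> iatoms F}
          \<longleftrightarrow> z \<in> {map (sT T) xs | xs. (I,xs) \<in> iatoms F}"
      proof
        assume "z \<in> (\<lambda>us. map (\<lambda>(p, u). f (comp_of P p) u) (zip (PI I) us)) ` {map s' xs | xs. (I,xs) \<in> iatoms F}"
        then obtain xs where "z = map (\<lambda>(p, u). f (comp_of P p) u) (zip (PI I) (map s' xs))" "(I,xs) \<in> iatoms F" by blast
        then show "z \<in> {map (sT T) xs | xs. (I,xs) \<in> iatoms F}" using mapeq by blast
      next
        assume "z \<in> {map (sT T) xs | xs. (I,xs) \<in> iatoms F}"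
        then obtain xs where "z = map (sT T) xs" "(I,xs) \<in> iatoms F" by blast
        then show "z \<in> (\<lambda>us. map (\<lambda>(p, u). f (comp_of P p) u) (zip (PI I) us)) ` {map s' xs | xs. (I,xs) \<in> iatoms F}"
          using mapeq[of I xs] by (auto simp: image_iff)
      qed
    qed
  qed
  have c3: "{(q, f C u) | q u C. (q, u) \<in> {(q, s' x) | C q x. (C,q,x) \<in> catoms F} \<and> q \<in> Q C}
      = {(q, sT T x) | C q x. (C,q,x) \<in> catoms F}"
  proof (rule set_eqI)
    fix z
    show "z \<in> {(q, f C u) | q u C. (q, u) \<in> {(q, s' x) | C q x. (C,q,x) \<in> catoms F} \<and> q \<in> Q C} \<longleftrightarrow>
          z \<in> {(q, sT T x) | C q x. (C,q,x) \<in> catoms F}"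
    proof
      assume "z \<in> {(q, f C u) | q u C. (q, u) \<in> {(q, s' x) | C q x. (C,q,x) \<in> catoms F} \<and> q \<in> Q C}"
      then obtain q u C C' x where h: "z = (q, f C u)" "u = s' x" "(C',q,x) \<in> catoms F" "q \<in> Q C" by blast
      have "q \<in> Q C'" using L(5) h(3) by blast
      then have "C = C'" using Qdis h(4) by blast
      then have "z = (q, sT T x)" using h fval by simp
      then show "z \<in> {(q, sT T x) | C q x. (C,q,x) \<in> catoms F}" using h(3) by blast
    next
      assume "z \<in> {(q, sT T x) | C q x. (C,q,x) \<in> catoms F}"
      then obtain C q x where h: "z = (q, sT T x)" "(C,q,x) \<in> catoms F" by blast
      have "q \<in> Q C" using L(5) h(2) by blast
      moreover have "z = (q, f C (s' x))" using h fval by simp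
      ultimately show "z \<in> {(q, f C u) | q u C. (q, u) \<in> {(q, s' x) | C q x. (C,q,x) \<in> catoms F} \<and> q \<in> Q C}"
        using h(2) by blast
    qed
  qed
  have "cfg_map P PI Q f c = canon T"
    unfolding L(3) model_def cfg_map_def canon_def F_def[symmetric] using c1 c2 c3 by simp
  then show ?thesis unfolding sym_cfg_def using f by blast
qed

end
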